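(* Let $\mu$ be an infinite regular cardinal and let $\rho_1$ be obtained by walking along a weakly coherent $\mu$-bounded $C$-sequence $\vec C=\langle C_\delta\mid\delta<\mu^+\rangle$. Suppose that there is a club $D\subseteq\mu^+$ such that for every $\delta\in E^{\mu^+}_\mu\cap D$ and every pair $\alpha<\beta$ of successive elements of $C_\delta$, $\mathrm{otp}(C_\beta\cap\alpha)>\mathrm{otp}(C_\delta\cap\alpha)+1$. Then $T(\rho_1)$ is special.
   Context: A $C$-sequence over $\mu^+$ is $\langle C_\delta\mid\delta<\mu^+\rangle$, each $C_\delta$ a closed subset of $\delta$ with $\sup(C_\delta)=\sup(\delta)$; $\mu$-bounded: $\mathrm{otp}(C_\delta)\le\mu$ for all $\delta$; weakly coherent: $|\{C_\delta\cap\epsilon\mid\delta<\mu^+\}|\le\mu$ for all $\epsilon<\mu^+$. $E^{\mu^+}_\mu=\{\alpha<\mu^+\mid\mathrm{cf}(\alpha)=\mu\}$. Walks: $\mathrm{Tr}(\beta,\gamma)(0)=\gamma$, $\mathrm{Tr}(\beta,\gamma)(n)=\min(C_{\mathrm{Tr}(\beta,\gamma)(n-1)}\setminus\beta)$ if $\mathrm{Tr}(\beta,\gamma)(n-1)>\beta$, else $\beta$; $\rho_2(\beta,\gamma)$ least $l$ with $\mathrm{Tr}(\beta,\gamma)(l)=\beta$; $\rho_1(\beta,\gamma)=\max\{\mathrm{otp}(C_{\mathrm{Tr}(\beta,\gamma)(n)}\cap\beta)\mid n<\rho_2(\beta,\gamma)\}$. $T(\rho_1)=\{\rho_{1\delta}\restriction\gamma\mid\gamma\le\delta<\mu^+\}$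 ordered by $\subseteq$, where $\rho_{1\delta}(\xi)=\rho_1(\xi,\delta)$. A $\mu^+$-tree $(T,<_T)$ (height $\mu^+$, levels of size $\le\mu$) is special iff there is $f:T\to T$ with $f(x)<_Tx$ for non-minimal $x$ and each $f^{-1}\{z\}$ covered by at most $\mu$ antichains. *)

theory Defs
  imports Main "HOL-Library.Equipollence"
begin

text \<open>Ordinals below mu^+ are modelled as the elements of a type 'a of class wellorder
  whose order type is mu^+.  The cardinal mu itself is an element m of 'a
  (mu < mu^+), and all ordinals <= mu (order types, values of rho_1) live in 'a.\<close>

definition below :: "'a::wellorder \<Rightarrow> 'a set" where
  "below x = {y. y < x}"

definition is_succ_of_regular :: "'a::wellorder \<Rightarrow> bool" where
  "is_succ_of_regular m \<longleftrightarrow>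
     infinite (below m) \<and>
     (\<forall>x<m. below x \<prec> below m) \<and>
     (\<forall>X \<subseteq> below m. (\<forall>x<m. \<exists>y\<in>X. x \<le> y) \<longrightarrow> X \<approx> below m) \<and>
     (\<forall>x::'a. below x \<lesssim> below m) \<and>
     \<not> {y. y < m \<or> m \<le> y} \<lesssim> below m"

definition otp :: "'a::wellorder set \<Rightarrow> 'a" where
  "otp X = (THE t. \<exists>f. bij_betw f X (below t) \<and> strict_mono_on X f)"

definition osup :: "'a::wellorder set \<Rightarrow> 'a" where
  "osup X = (LEAST s. \<forall>x\<in>X. x \<le> s)"

definition osucc :: "'a::wellorder \<Rightarrow> 'a" where
  "osucc x = (LEAST y. x < y)"

definition is_limit_pt :: "'a::wellorder set \<Rightarrow> 'a \<Rightarrow> bool" where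
  "is_limit_pt X a \<longleftrightarrow> (\<exists>g\<in>X. g < a) \<and> (\<forall>b<a. \<exists>g\<in>X. b < g \<and> g < a)"

definition cof :: "'a::wellorder \<Rightarrow> 'a" where
  "cof a = (LEAST t. \<exists>X \<subseteq> below a. (\<forall>b<a. \<exists>x\<in>X. b \<le> x) \<and> otp X = t)"

definition C_sequence :: "('a::wellorder \<Rightarrow> 'a set) \<Rightarrow> bool" where
  "C_sequence C \<longleftrightarrow>
     (\<forall>d. C d \<subseteq> below d \<and>
          (\<forall>a<d. is_limit_pt (C d) a \<longrightarrow> a \<in> C d) \<and>
          osup (C d) = osup (below d))"

definition mu_bounded :: "'a::wellorder \<Rightarrow> ('a \<Rightarrow> 'a set) \<Rightarrow> bool" where
  "mu_bounded m C \<longleftrightarrow> (\<forall>d. otp (C d) \<le> m)"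

definition weakly_coherent :: "'a::wellorder \<Rightarrow> ('a \<Rightarrow> 'a set) \<Rightarrow> bool" where
  "weakly_coherent m C \<longleftrightarrow> (\<forall>e::'a. {C d \<inter> below e | d. True} \<lesssim> below m)"

definition club :: "'a::wellorder set \<Rightarrow> bool" where
  "club D \<longleftrightarrow> (\<forall>x. \<exists>y\<in>D. x \<le> y) \<and> (\<forall>a. is_limit_pt D a \<longrightarrow> a \<in> D)"

primrec tr :: "('a::wellorder \<Rightarrow> 'a set) \<Rightarrow> 'a \<Rightarrow> 'a \<Rightarrow> nat \<Rightarrow> 'a" where
  "tr C b g 0 = g"
| "tr C b g (Suc n) =
     (if b < tr C b g n then (LEAST x. x \<in> C (tr C b g n) \<and> b \<le> x) else b)"

definition rho2 :: "('a::wellorder \<Rightarrow> 'a set) \<Rightarrow> 'a \<Rightarrow> 'a \<Rightarrow> nat" where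
  "rho2 C b g = (LEAST l. tr C b g l = b)"

definition rho1 :: "('a::wellorder \<Rightarrow> 'a set) \<Rightarrow> 'a \<Rightarrow> 'a \<Rightarrow> 'a" where
  "rho1 C b g = Max ((\<lambda>n. otp (C (tr C b g n) \<inter> below b)) ` {..<rho2 C b g})"

text \<open>The tree T(rho_1): nodes rho_{1 d} restricted to g, as partial maps with domain below g,
  ordered by map inclusion.\<close>
definition T_rho1 :: "('a::wellorder \<Rightarrow> 'a set) \<Rightarrow> ('a \<rightharpoonup> 'a) set" where
  "T_rho1 C = {(\<lambda>x. if x < g then Some (rho1 C x d) else None) | g d. g \<le> d}"

definition tree_less :: "('a \<rightharpoonup> 'b) \<Rightarrow> ('a \<rightharpoonup> 'b) \<Rightarrow> bool" where
  "tree_less s t \<longleftrightarrow> s \<subseteq>\<^sub>m t \<and> s \<noteq> t"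

definition antichain_t :: "('a \<rightharpoonup> 'b) set \<Rightarrow> bool" where
  "antichain_t A \<longleftrightarrow> (\<forall>x\<in>A. \<forall>y\<in>A. \<not> tree_less x y)"

definition special :: "'k::wellorder \<Rightarrow> ('a \<rightharpoonup> 'b) set \<Rightarrow> bool" where
  "special m T \<longleftrightarrow> (\<exists>f. (\<forall>x\<in>T. f x \<in> T) \<and>
     (\<forall>x\<in>T. (\<exists>y\<in>T. tree_less y x) \<longrightarrow> tree_less (f x) x) \<and>
     (\<forall>z\<in>T. \<exists>\<A>. \<A> \<lesssim> below m \<and> (\<forall>A\<in>\<A>. antichain_t A) \<and>
                 {x\<in>T. f x = z} \<subseteq> \<Union>\<A>))"

end

theory Submission
  imports Defs
begin

unbundle cardinal_syntax

lemma lepoll_ordLeq: "A \<lesssim> B \<longleftrightarrow> |A| \<le>o |B|"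
  unfolding lepoll_def using card_of_ordLeq by blast

lemma UN_lepoll_inf:
  assumes "infinite B" "I \<lesssim> B" "\<And>i. i \<in> I \<Longrightarrow> A i \<lesssim> B"
  shows "(\<Union>i\<in>I. A i) \<lesssim> B"
  using card_of_UNION_ordLeq_infinite[of B I A] assms by (simp add: lepoll_ordLeq)

lemma Un_lepoll_inf:
  assumes "infinite C" "A \<lesssim> C" "B \<lesssim> C"
  shows "A \<union> B \<lesssim> C"
proof -
  have "A \<union> B = (\<Union>i\<in>{True,False}. if i then A else B)" by auto
  also have "\<dots> \<lesssim> C"
    by (rule UN_lepoll_inf) (use assms in \<open>auto intro: finite_lepoll_infinite\<close>)
  finally show ?thesis .
qed

lemma times_lepoll_inf:
  assumes "infinite A" shows "A \<times> A \<lesssim> A"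
  using card_of_Times_same_infinite[OF assms] ordIso_iff_ordLeq lepoll_ordLeq by blast

definition z0 :: "'a::wellorder" where "z0 = (LEAST x. True)"

lemma z0_le: "z0 \<le> (x::'a::wellorder)"
  unfolding z0_def by (rule Least_le) simp

definition rk :: "'a::wellorder set \<Rightarrow> 'a \<Rightarrow> 'a" where
  "rk X = wfrec {(x,y). x < y} (\<lambda>f y. LEAST z. \<forall>y'\<in>X. y' < y \<longrightarrow> f y' < z)"

lemma rk_eq: "rk X y = (LEAST z. \<forall>y'\<in>X. y' < y \<longrightarrow> rk X y' < z)"
proof -
  let ?R = "{(x::'a,y). x < y}"
  let ?H = "(\<lambda>f y. LEAST z. \<forall>y'\<in>X. y' < y \<longrightarrow> f y' < z)"
  have "rk X y = wfrec ?R ?H y" by (simp add: rk_def)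
  also have "\<dots> = ?H (cut (wfrec ?R ?H) ?R y) y" by (rule wfrec[OF wf])
  also have "\<dots> = (LEAST z. \<forall>y'\<in>X. y' < y \<longrightarrow> rk X y' < z)"
    by (rule arg_cong[where f=Least]) (auto simp: cut_apply rk_def fun_eq_iff)
  finally show ?thesis .
qed

lemma rk_le_self: "rk X y \<le> y"
proof (induction y rule: less_induct)
  case (less y)
  show ?case
    by (subst rk_eq, rule Least_le) (use less in \<open>auto intro: le_less_trans\<close>)
qed

lemma rk_prop: "\<forall>y'\<in>X. y' < y \<longrightarrow> rk X y' < rk X y"
proof -
  have "\<forall>y'\<in>X. y' < y \<longrightarrow> rk X y' < y" using rk_le_self le_less_trans by blast
  then show ?thesis by (subst (2) rk_eq, rule LeastI[where k=y])
qed

lemma rk_less: "y' \<in> X \<Longrightarrow> y' < y \<Longrightarrow> rk X y' < rk X y"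
  using rk_prop by blast

lemma rk_mono:
  assumes ab: "a \<le> b" shows "rk X a \<le> rk X b"
proof -
  have h: "\<forall>y'\<in>X. y' < a \<longrightarrow> rk X y' < rk X b"
  proof (intro ballI impI)
    fix y' assume y': "y' \<in> X" "y' < a"
    have "y' < b" using y'(2) ab by (rule less_le_trans)
    then show "rk X y' < rk X b" by (rule rk_less[OF y'(1)])
  qed
  show ?thesis unfolding rk_eq[of X a] by (rule Least_le) (rule h)
qed

lemma rk_strict: "y \<in> X \<Longrightarrow> a \<le> y \<Longrightarrow> y < b \<Longrightarrow> rk X a < rk X b"
  using rk_mono rk_less le_less_trans by blast

lemma rk_down: "z < rk X y \<Longrightarrow> \<exists>y'\<in>X. y' < y \<and> rk X y' = z"
proof (induction y arbitrary: z rule: less_induct)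
  case (less y)
  have "\<not> (\<forall>y'\<in>X. y' < y \<longrightarrow> rk X y' < z)"
  proof
    assume "\<forall>y'\<in>X. y' < y \<longrightarrow> rk X y' < z"
    then have "rk X y \<le> z" by (subst rk_eq, rule Least_le)
    then show False using less.prems by simp
  qed
  then obtain y' where y': "y' \<in> X" "y' < y" "z \<le> rk X y'" by (auto simp: not_less)
  show ?case
  proof (cases "z = rk X y'")
    case True then show ?thesis using y' by blast
  next
    case False
    then have "z < rk X y'" using y' by simp
    then obtain y'' where "y'' \<in> X" "y'' < y'" "rk X y'' = z" using less.IH y' by blast
    then show ?thesis using y' by (intro bexI[of _ y'']) (auto intro: less_trans)
  qed
qed


lemma rk_succ:
  assumes "a \<in> X" "a < a'" "\<forall>y\<in>X. \<not> (a < y \<and> y < a')"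
  shows "rk X a' = osucc (rk X a)"
proof -
  have "(\<forall>y'\<in>X. y' < a' \<longrightarrow> rk X y' < z) \<longleftrightarrow> rk X a < z" for z
  proof
    assume "\<forall>y'\<in>X. y' < a' \<longrightarrow> rk X y' < z" then show "rk X a < z" using assms by blast
  next
    assume h: "rk X a < z"
    show "\<forall>y'\<in>X. y' < a' \<longrightarrow> rk X y' < z"
    proof (intro ballI impI)
      fix y' assume "y' \<in> X" "y' < a'"
      then have "y' \<le> a" using assms(3) by (meson not_le)
      then show "rk X y' < z" using rk_mono h le_less_trans by blast
    qed
  qed
  then show ?thesis by (subst rk_eq) (simp add: osucc_def)
qed

lemma rk_inter: "y \<le> a \<Longrightarrow> rk (X \<inter> below a) y = rk X y"
proof (induction y rule: less_induct)
  case (less y)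
  have "(\<forall>y'\<in>X \<inter> below a. y' < y \<longrightarrow> rk (X \<inter> below a) y' < z) \<longleftrightarrow>
        (\<forall>y'\<in>X. y' < y \<longrightarrow> rk X y' < z)" for z
    using less by (auto simp: below_def)
  then show ?case by (subst rk_eq, subst (2) rk_eq) simp
qed

lemma below_inj: "below (a::'a::wellorder) = below b \<Longrightarrow> a = b"
  by (metis below_def linorder_neq_iff mem_Collect_eq order_less_irrefl)

lemma rk_bij:
  assumes "X \<subseteq> below d"
  shows "bij_betw (rk X) X (below (rk X d)) \<and> strict_mono_on X (rk X)"
proof -
  have sm: "strict_mono_on X (rk X)"
    by (rule strict_mono_onI) (simp add: rk_less)
  have "inj_on (rk X) X"
    using sm strict_mono_on_imp_inj_on by blast
  moreover have "rk X ` X = below (rk X d)"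
  proof
    show "rk X ` X \<subseteq> below (rk X d)" using assms rk_less by (auto simp: below_def)
    show "below (rk X d) \<subseteq> rk X ` X"
      using rk_down by (fastforce simp: below_def)
  qed
  ultimately show ?thesis using sm by (simp add: bij_betw_def)
qed

lemma iso_eq_rk:
  assumes "bij_betw g X (below t)" "strict_mono_on X g" "y \<in> X"
  shows "g y = rk X y"
  using assms(3)
proof (induction y rule: less_induct)
  case (less y)
  have sm: "\<And>a b. a \<in> X \<Longrightarrow> b \<in> X \<Longrightarrow> a < b \<Longrightarrow> g a < g b"
    using assms(2) strict_mono_onD by blast
  have "g y = (LEAST z. \<forall>y'\<in>X. y' < y \<longrightarrow> g y' < z)"
  proof (rule Least_equality[symmetric])
    show "\<forall>y'\<in>X. y' < y \<longrightarrow> g y' < g y"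
      using sm less.prems by blast
  next
    fix z assume h: "\<forall>y'\<in>X. y' < y \<longrightarrow> g y' < z"
    show "g y \<le> z"
    proof (rule ccontr)
      assume "\<not> g y \<le> z"
      then have "z < g y" by simp
      moreover have "g y \<in> below t" using assms(1) less.prems by (simp add: bij_betw_def image_iff) blast
      ultimately have "z \<in> below t" by (simp add: below_def)
      then have "z \<in> g ` X" using assms(1) by (simp add: bij_betw_def)
      then obtain y'' where y'': "y'' \<in> X" "g y'' = z" by blast
      show False
      proof (cases "y'' < y")
        case True then show False using h y'' by blast
      next
        case False
        then have "y = y'' \<or> y < y''" by auto
        then have "g y \<le> g y''" using sm less.prems y''(1) by (metis order.refl order.strict_implies_order)
        then show False using \<open>z < g y\<close> y'' by simp
      qed
    qed
  qed
  also have "\<dots> = (LEAST z. \<forall>y'\<in>X. y' < y \<longrightarrow> rk X y' < z)"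
  proof -
    have "\<And>y'. y' \<in> X \<Longrightarrow> y' < y \<Longrightarrow> g y' = rk X y'" using less.IH by blast
    then have "(\<forall>y'\<in>X. y' < y \<longrightarrow> g y' < z) = (\<forall>y'\<in>X. y' < y \<longrightarrow> rk X y' < z)" for z
      by auto
    then show ?thesis by simp
  qed
  also have "\<dots> = rk X y" by (rule rk_eq[symmetric])
  finally show ?case .
qed

lemma otp_rk:
  assumes "X \<subseteq> below d"
  shows "otp X = rk X d"
  unfolding otp_def
proof (rule the_equality)
  show "\<exists>f. bij_betw f X (below (rk X d)) \<and> strict_mono_on X f"
    using rk_bij[OF assms] by blast
next
  fix t :: 'a assume "\<exists>f. bij_betw f X (below t) \<and> strict_mono_on X f"
  then obtain g :: "'a \<Rightarrow> 'a" where g: "bij_betw g X (below t)" "strict_mono_on X g" by blast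
  have "g ` X = rk X ` X"
    using iso_eq_rk[OF g] by (auto simp: image_def)
  then have "below t = below (rk X d)"
    using g(1) rk_bij[OF assms] by (simp add: bij_betw_def)
  then show "t = rk X d" by (rule below_inj)
qed

lemma otp_below: "otp (X \<inter> below a) = rk X a"
  using otp_rk[of "X \<inter> below a" a] rk_inter[of a a X] by auto

lemma otp_eqpoll: "X \<subseteq> below d \<Longrightarrow> X \<approx> below (otp X)"
  using rk_bij[of X d] otp_rk[of X d] by (auto simp: eqpoll_def)

lemma otp_lt:
  assumes "X \<subseteq> below d" "X \<prec> below (m::'a::wellorder)"
  shows "otp X < m"
proof (rule ccontr)
  assume "\<not> otp X < m"
  then have "below m \<subseteq> below (otp X)" by (auto simp: below_def)
  then have "below m \<lesssim> X"
    using otp_eqpoll[OF assms(1)] by (meson eqpoll_sym lepoll_trans2 subset_imp_lepoll)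
  then show False using assms(2) by (meson lepoll_antisym lesspoll_def)
qed


lemma Cseq_sub: "C_sequence C \<Longrightarrow> C d \<subseteq> below d"
  by (simp add: C_sequence_def)

lemma Cseq_lt: "C_sequence C \<Longrightarrow> x \<in> C d \<Longrightarrow> x < d"
  using Cseq_sub by (fastforce simp: below_def)

lemma Cseq_closed: "C_sequence C \<Longrightarrow> a < d \<Longrightarrow> is_limit_pt (C d) a \<Longrightarrow> a \<in> C d"
  by (simp add: C_sequence_def)

lemma C_ge:
  assumes C: "C_sequence C" and b: "z0 < b" "b < \<eta>"
  shows "\<exists>x\<in>C \<eta>. b \<le> x"
proof (rule ccontr)
  assume "\<not> (\<exists>x\<in>C \<eta>. b \<le> x)"
  then have lt: "\<forall>x\<in>C \<eta>. x < b" by auto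
  have e: "osup (C \<eta>) = osup (below \<eta>)" using C by (simp add: C_sequence_def)
  have "osup (C \<eta>) \<le> b" unfolding osup_def by (rule Least_le) (use lt in auto)
  moreover have "b \<le> osup (below \<eta>)" unfolding osup_def
    by (rule LeastI2[where a=\<eta>]) (use b in \<open>auto simp: below_def\<close>)
  ultimately have ob: "osup (C \<eta>) = b" using e by simp
  have ne: "C \<eta> \<noteq> {}"
  proof
    assume "C \<eta> = {}"
    then have "osup (C \<eta>) = z0" by (simp add: osup_def z0_def)
    then show False using ob b by simp
  qed
  have "is_limit_pt (C \<eta>) b"
    unfolding is_limit_pt_def
  proof
    show "\<exists>g\<in>C \<eta>. g < b" using ne lt by blast
    show "\<forall>c<b. \<exists>g\<in>C \<eta>. c < g \<and> g < b"
    proof (intro allI impI, rule ccontr)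
      fix c assume "c < b" "\<not> (\<exists>g\<in>C \<eta>. c < g \<and> g < b)"
      then have "\<forall>x\<in>C \<eta>. x \<le> c" using lt by (meson not_le)
      then have "osup (C \<eta>) \<le> c" unfolding osup_def by (rule Least_le)
      then show False using ob \<open>c < b\<close> by simp
    qed
  qed
  then have "b \<in> C \<eta>" using Cseq_closed[OF C b(2)] by blast
  then show False using lt by blast
qed

context
  fixes C :: "'a::wellorder \<Rightarrow> 'a set" and b :: 'a
  assumes C: "C_sequence C" and bz: "z0 < b"
begin

lemma LeastC:
  assumes "x \<in> C \<eta>" "b \<le> x"
  shows "(LEAST x. x \<in> C \<eta> \<and> b \<le> x) \<in> C \<eta> \<and> b \<le> (LEAST x. x \<in> C \<eta> \<and> b \<le> x)
         \<and> (LEAST x. x \<in> C \<eta> \<and> b \<le> x) \<le> x"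
proof -
  have "(LEAST x. x \<in> C \<eta> \<and> b \<le> x) \<in> C \<eta> \<and> b \<le> (LEAST x. x \<in> C \<eta> \<and> b \<le> x)"
    by (rule LeastI[where k=x]) (use assms in auto)
  moreover have "(LEAST x. x \<in> C \<eta> \<and> b \<le> x) \<le> x"
    by (rule Least_le) (use assms in auto)
  ultimately show ?thesis by blast
qed

lemma tr_step:
  assumes "b < tr C b g n"
  shows "tr C b g (Suc n) \<in> C (tr C b g n) \<and> b \<le> tr C b g (Suc n) \<and> tr C b g (Suc n) < tr C b g n"
proof -
  obtain x where "x \<in> C (tr C b g n)" "b \<le> x" using C_ge[OF C bz assms] by blast
  from LeastC[OF this] show ?thesis using assms Cseq_lt[OF C] by simp
qed

lemma tr_ge: "b \<le> g \<Longrightarrow> b \<le> tr C b g n"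
proof (induction n)
  case 0 then show ?case by simp
next
  case (Suc n)
  show ?case
  proof (cases "b < tr C b g n")
    case True
    then show ?thesis using tr_step by blast
  qed simp
qed

lemma tr_reach: "b \<le> g \<Longrightarrow> \<exists>l. tr C b g l = b"
proof (rule ccontr)
  assume g: "b \<le> g" and "\<not> (\<exists>l. tr C b g l = b)"
  then have lt: "\<And>l. b < tr C b g l" using tr_ge order.not_eq_order_implies_strict by metis
  let ?y = "LEAST y. y \<in> range (tr C b g)"
  have "tr C b g 0 \<in> range (tr C b g)" by (rule rangeI)
  then have "?y \<in> range (tr C b g)" by (rule LeastI)
  then obtain l where l: "?y = tr C b g l" by blast
  have le: "?y \<le> tr C b g (Suc l)" by (rule Least_le) (rule rangeI)
  have a: "tr C b g (Suc l) < tr C b g l" using tr_step[OF lt[of l]] by blast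
  show False using a l le by (metis leD)
qed

lemma rho2_tr: "b \<le> g \<Longrightarrow> tr C b g (rho2 C b g) = b"
  unfolding rho2_def using tr_reach by (rule LeastI_ex)

lemma rho2_less: "b \<le> g \<Longrightarrow> n < rho2 C b g \<Longrightarrow> b < tr C b g n"
  unfolding rho2_def using not_less_Least tr_ge order.not_eq_order_implies_strict by metis

lemma rho2_pos: "b < g \<Longrightarrow> 0 < rho2 C b g"
proof -
  assume bg: "b < g"
  then have "tr C b g (rho2 C b g) = b" using rho2_tr by simp
  then show ?thesis using bg by (cases "rho2 C b g") auto
qed

lemma tr_shift: "tr C b g (n + j) = tr C b (tr C b g n) j"
  by (induction j) auto

lemma rho2_shift:
  assumes "b \<le> g" "n \<le> rho2 C b g"
  shows "rho2 C b g = n + rho2 C b (tr C b g n)"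
proof -
  let ?g' = "tr C b g n"
  have g': "b \<le> ?g'" using tr_ge assms(1) by blast
  show ?thesis
    unfolding rho2_def[of C b g]
  proof (rule Least_equality)
    show "tr C b g (n + rho2 C b ?g') = b" using tr_shift rho2_tr[OF g'] by simp
  next
    fix l assume l: "tr C b g l = b"
    show "n + rho2 C b ?g' \<le> l"
    proof (rule ccontr)
      assume "\<not> n + rho2 C b ?g' \<le> l"
      then have lt: "l < n + rho2 C b ?g'" by simp
      show False
      proof (cases "l < n")
        case True
        then have "l < rho2 C b g" using assms(2) by simp
        then show False using rho2_less[OF assms(1)] l by fastforce
      next
        case False
        then obtain j where j: "l = n + j" by (metis le_add_diff_inverse not_less)
        then have "j < rho2 C b ?g'" using lt by simp
        then have "b < tr C b ?g' j" using rho2_less[OF g'] by blast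
        then show False using l j tr_shift by simp
      qed
    qed
  qed
qed

definition rset :: "'a \<Rightarrow> 'a set" where
  "rset g = (\<lambda>n. otp (C (tr C b g n) \<inter> below b)) ` {..<rho2 C b g}"

lemma rho1_rset: "rho1 C b g = Max (rset g)"
  by (simp add: rho1_def rset_def)

lemma rset_fin: "finite (rset g)"
  by (simp add: rset_def)

lemma rset_ne: "b < g \<Longrightarrow> rset g \<noteq> {}"
  using rho2_pos by (auto simp: rset_def)

lemma rset_shift:
  assumes "b \<le> g" "n \<le> rho2 C b g"
  shows "rset g = (\<lambda>i. otp (C (tr C b g i) \<inter> below b)) ` {..<n} \<union> rset (tr C b g n)"
proof -
  have e: "rho2 C b g = n + rho2 C b (tr C b g n)" by (rule rho2_shift[OF assms])
  have "{..<n + rho2 C b (tr C b g n)} = {..<n} \<union> (\<lambda>j. n + j) ` {..<rho2 C b (tr C b g n)}"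
    (is "?L = ?R")
  proof
    show "?L \<subseteq> ?R"
    proof
      fix x assume x: "x \<in> ?L"
      show "x \<in> ?R"
      proof (cases "x < n")
        case False
        then have "x = n + (x - n)" "x - n < rho2 C b (tr C b g n)" using x by auto
        then show ?thesis by blast
      qed simp
    qed
    show "?R \<subseteq> ?L" by auto
  qed
  then show ?thesis unfolding rset_def e by (auto simp: tr_shift image_Un image_image)
qed

lemma rset_0: "b < g \<Longrightarrow> rk (C g) b \<in> rset g"
  unfolding rset_def using rho2_pos by (intro image_eqI[where x=0]) (auto simp: otp_below)

lemma rho1_in_C:
  assumes "b \<in> C g"
  shows "rho1 C b g = rk (C g) b"
proof -
  have bg: "b < g" using Cseq_lt[OF C assms] .
  have "(LEAST x. x \<in> C g \<and> b \<le> x) = b" by (rule Least_equality) (use assms in auto)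
  then have t1: "tr C b g 1 = b"
    using bg by simp
  have r: "rho2 C b g = 1"
    unfolding rho2_def
  proof (rule Least_equality)
    show "tr C b g 1 = b" by (rule t1)
    fix y assume "tr C b g y = b" then show "1 \<le> y" using bg by (cases y) auto
  qed
  show ?thesis unfolding rho1_def r by (simp add: otp_below lessThan_Suc)
qed

end


lemma cof_le:
  assumes "X \<subseteq> below g" "\<forall>b<g. \<exists>x\<in>X. b \<le> x"
  shows "cof g \<le> otp X"
  unfolding cof_def by (rule Least_le) (use assms in blast)

context
  fixes m :: "'a::wellorder"
  assumes reg: "is_succ_of_regular m"
begin

lemma reg_all: "infinite (below m) \<and> (\<forall>x<m. below x \<prec> below m) \<and>
     (\<forall>X \<subseteq> below m. (\<forall>x<m. \<exists>y\<in>X. x \<le> y) \<longrightarrow> X \<approx> below m) \<and>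
     (\<forall>x::'a. below x \<lesssim> below m)"
  using reg by (simp add: is_succ_of_regular_def)
lemma reg_inf: "infinite (below m)" using reg_all by simp
lemma reg_lt: "x < m \<Longrightarrow> below x \<prec> below m" using reg_all by simp
lemma reg_cof: "X \<subseteq> below m \<Longrightarrow> (\<forall>x<m. \<exists>y\<in>X. x \<le> y) \<Longrightarrow> X \<approx> below m"
  using reg_all by simp
lemma reg_le: "below (x::'a) \<lesssim> below m" using reg_all by simp
lemma reg_univ: "\<not> (UNIV::'a set) \<lesssim> below m"
proof -
  have "{y. y < m \<or> m \<le> y} = (UNIV::'a set)" by auto
  then show ?thesis using reg by (simp add: is_succ_of_regular_def)
qed

lemma z0_m: "z0 < m"
proof -
  obtain x where "x \<in> below m" using reg_inf by (metis finite.emptyI ex_in_conv)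
  then show ?thesis using z0_le[of x] by (auto simp: below_def)
qed

lemma fin_lesspoll: "finite X \<Longrightarrow> X \<prec> below m"
  using finite_lesspoll_infinite reg_inf by blast

lemma fin_lepoll: "finite X \<Longrightarrow> X \<lesssim> below m"
  using finite_lepoll_infinite reg_inf by blast

lemma insert_lesspoll: "X \<prec> below m \<Longrightarrow> insert a X \<prec> below m"
proof (cases "finite X")
  case True then show ?thesis by (intro fin_lesspoll) simp
next
  case False
  assume "X \<prec> below m"
  then show ?thesis using infinite_insert_eqpoll[OF False] eq_lesspoll_trans by blast
qed

lemma insert_lepoll: "X \<lesssim> below m \<Longrightarrow> insert a X \<lesssim> below m"
proof -
  assume X: "X \<lesssim> below m"
  have "{a} \<union> X \<lesssim> below m" by (rule Un_lepoll_inf[OF reg_inf]) (simp_all add: fin_lepoll X)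
  then show ?thesis by simp
qed

lemma no_max: "\<exists>z. (y::'a) < z"
proof (rule ccontr)
  assume "\<not> (\<exists>z. y < z)"
  then have "\<forall>x. x \<le> y" by (auto simp: not_less)
  then have "(UNIV::'a set) = insert y (below y)" by (auto simp: below_def less_le)
  then have "(UNIV::'a set) \<lesssim> below m" using insert_lepoll[OF reg_le[of y], of y] by simp
  then show False using reg_univ by blast
qed

lemma atMost_lesspoll: "\<nu> < m \<Longrightarrow> {y. y \<le> \<nu>} \<prec> below m"
proof -
  assume "\<nu> < m"
  have e: "{y. y \<le> \<nu>} = insert \<nu> (below \<nu>)" by (auto simp: below_def)
  show ?thesis by (subst e) (rule insert_lesspoll[OF reg_lt[OF \<open>\<nu> < m\<close>]])
qed

lemma atMost_lepoll: "{y. y \<le> (d::'a)} \<lesssim> below m"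
proof -
  have e: "{y. y \<le> d} = insert d (below d)" by (auto simp: below_def)
  show ?thesis by (subst e) (rule insert_lepoll[OF reg_le[of d]])
qed

end


lemma rho1_lt_m:
  assumes C: "C_sequence C" and mb: "mu_bounded m C" and b: "z0 < b" "b < g"
  shows "rho1 C b g < m"
proof -
  have "\<forall>v \<in> rset C b g. v < m"
  proof
    fix v assume "v \<in> rset C b g"
    then obtain n where n: "n < rho2 C b g" "v = otp (C (tr C b g n) \<inter> below b)"
      unfolding rset_def[OF C b(1)] by blast
    let ?\<eta> = "tr C b g n"
    have b\<eta>: "b < ?\<eta>" using rho2_less[OF C b(1)] n b by simp
    have st: "tr C b g (Suc n) \<in> C ?\<eta> \<and> b \<le> tr C b g (Suc n) \<and> tr C b g (Suc n) < ?\<eta>"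
      using tr_step[OF C b(1) b\<eta>] .
    have "v = rk (C ?\<eta>) b" using n otp_below by simp
    also have "\<dots> < rk (C ?\<eta>) ?\<eta>" using rk_strict st by blast
    also have "\<dots> = otp (C ?\<eta>)" using otp_rk[OF Cseq_sub[OF C]] by simp
    also have "\<dots> \<le> m" using mb by (simp add: mu_bounded_def)
    finally show "v < m" .
  qed
  moreover have "Max (rset C b g) \<in> rset C b g"
    using rset_fin[OF C b(1)] rset_ne[OF C b(1) b(2)] by (rule Max_in)
  ultimately show ?thesis using rho1_rset[OF C b(1)] by simp
qed

lemma tr1:
  assumes "\<xi> < \<gamma>"
  shows "tr C \<xi> \<gamma> 1 = (LEAST x. x \<in> C \<gamma> \<and> \<xi> \<le> x)"
  using assms by simp

lemma rho1_between:
  assumes C: "C_sequence C" and a: "\<alpha> \<in> C \<gamma>" "\<alpha>' \<in> C \<gamma>" "\<alpha> < \<xi>" "\<xi> < \<alpha>'"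
    "\<forall>y\<in>C \<gamma>. \<not> (\<alpha> < y \<and> y < \<alpha>')" and z: "z0 < \<xi>"
  shows "rk (C \<alpha>') \<xi> \<le> rho1 C \<xi> \<gamma>"
proof -
  have \<xi>\<gamma>: "\<xi> < \<gamma>" using Cseq_lt[OF C a(2)] a(4) by simp
  have "(LEAST x. x \<in> C \<gamma> \<and> \<xi> \<le> x) = \<alpha>'"
  proof (rule Least_equality)
    show "\<alpha>' \<in> C \<gamma> \<and> \<xi> \<le> \<alpha>'" using a by simp
    fix y assume "y \<in> C \<gamma> \<and> \<xi> \<le> y"
    then show "\<alpha>' \<le> y" using a(3,5) by (meson le_less_trans not_le)
  qed
  then have t1: "tr C \<xi> \<gamma> 1 = \<alpha>'" using \<xi>\<gamma> by simp
  have "tr C \<xi> \<gamma> (rho2 C \<xi> \<gamma>) = \<xi>" using rho2_tr[OF C z] \<xi>\<gamma> by simp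
  then have "1 < rho2 C \<xi> \<gamma>" using t1 \<xi>\<gamma> a(4)
    by (cases "rho2 C \<xi> \<gamma>"; cases "rho2 C \<xi> \<gamma> - 1") auto
  then have "rk (C \<alpha>') \<xi> \<in> rset C \<xi> \<gamma>"
    unfolding rset_def[OF C z] using t1 by (intro image_eqI[where x=1]) (auto simp: otp_below)
  then show ?thesis
    using Max_ge[OF rset_fin[OF C z]] rho1_rset[OF C z] by simp
qed

lemma concat_tr:
  assumes C: "C_sequence C" and z: "z0 < \<xi>" and o: "\<xi> < \<gamma>" "\<gamma> \<le> \<delta>"
    and H: "\<forall>i<rho2 C \<gamma> \<delta>. \<forall>y\<in>C (tr C \<gamma> \<delta> i). \<not> (\<xi> \<le> y \<and> y < \<gamma>)"
  shows "i \<le> rho2 C \<gamma> \<delta> \<Longrightarrow> tr C \<xi> \<delta> i = tr C \<gamma> \<delta> i"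
proof (induction i)
  case 0 show ?case by simp
next
  case (Suc i)
  then have i: "i < rho2 C \<gamma> \<delta>" by simp
  have IH: "tr C \<xi> \<delta> i = tr C \<gamma> \<delta> i" using Suc by simp
  have z\<gamma>: "z0 < \<gamma>" using z o by simp
  have g\<eta>: "\<gamma> < tr C \<gamma> \<delta> i" using rho2_less[OF C z\<gamma> o(2) i] .
  have "(\<lambda>x. x \<in> C (tr C \<gamma> \<delta> i) \<and> \<xi> \<le> x) = (\<lambda>x. x \<in> C (tr C \<gamma> \<delta> i) \<and> \<gamma> \<le> x)"
    using H i o(1) by (auto intro!: ext simp: not_less)
  moreover have "\<xi> < tr C \<gamma> \<delta> i" using o(1) g\<eta> by simp
  ultimately show ?case using IH g\<eta> by simp
qed

lemma concat_rset:
  assumes C: "C_sequence C" and z: "z0 < \<xi>" and o: "\<xi> < \<gamma>" "\<gamma> \<le> \<delta>"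
    and H: "\<forall>i<rho2 C \<gamma> \<delta>. \<forall>y\<in>C (tr C \<gamma> \<delta> i). \<not> (\<xi> \<le> y \<and> y < \<gamma>)"
  shows "rset C \<xi> \<delta> = (\<lambda>i. otp (C (tr C \<gamma> \<delta> i) \<inter> below \<xi>)) ` {..<rho2 C \<gamma> \<delta>} \<union> rset C \<xi> \<gamma>"
proof -
  let ?k = "rho2 C \<gamma> \<delta>"
  have z\<gamma>: "z0 < \<gamma>" using z o by simp
  have eq: "\<And>i. i \<le> ?k \<Longrightarrow> tr C \<xi> \<delta> i = tr C \<gamma> \<delta> i"
    using concat_tr[OF C z o H] by blast
  have \<xi>\<delta>: "\<xi> \<le> \<delta>" using o by simp
  have kle: "?k \<le> rho2 C \<xi> \<delta>"
  proof (rule ccontr)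
    assume "\<not> ?k \<le> rho2 C \<xi> \<delta>"
    then have lt: "rho2 C \<xi> \<delta> < ?k" by simp
    have "tr C \<xi> \<delta> (rho2 C \<xi> \<delta>) = \<xi>" using rho2_tr[OF C z \<xi>\<delta>] .
    moreover have "tr C \<xi> \<delta> (rho2 C \<xi> \<delta>) = tr C \<gamma> \<delta> (rho2 C \<xi> \<delta>)" using eq lt by simp
    moreover have "\<gamma> < tr C \<gamma> \<delta> (rho2 C \<xi> \<delta>)" using rho2_less[OF C z\<gamma> o(2) lt] .
    ultimately show False using o by simp
  qed
  have "rset C \<xi> \<delta> = (\<lambda>i. otp (C (tr C \<xi> \<delta> i) \<inter> below \<xi>)) ` {..<?k} \<union> rset C \<xi> (tr C \<xi> \<delta> ?k)"
    by (rule rset_shift[OF C z \<xi>\<delta> kle])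
  also have "tr C \<xi> \<delta> ?k = \<gamma>" using eq[of ?k] rho2_tr[OF C z\<gamma> o(2)] by simp
  also have "(\<lambda>i. otp (C (tr C \<xi> \<delta> i) \<inter> below \<xi>)) ` {..<?k} = (\<lambda>i. otp (C (tr C \<gamma> \<delta> i) \<inter> below \<xi>)) ` {..<?k}"
    using eq by (intro image_cong) auto
  finally show ?thesis .
qed

lemma bound_step:
  assumes C: "C_sequence C" and mb: "mu_bounded m C" and cg: "cof g = m" and z: "z0 < g" and g: "g < \<eta>"
  shows "\<exists>b<g. \<forall>y\<in>C \<eta>. y < g \<longrightarrow> y \<le> b"
proof (cases "g \<in> C \<eta>")
  case True
  show ?thesis
  proof (rule ccontr)
    assume nb: "\<not> ?thesis"
    let ?Y = "C \<eta> \<inter> below g"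
    have cofY: "\<forall>b<g. \<exists>x\<in>?Y. b \<le> x"
    proof (intro allI impI)
      fix b assume "b < g"
      with nb obtain y where "y \<in> C \<eta>" "y < g" "\<not> y \<le> b" by blast
      then show "\<exists>x\<in>?Y. b \<le> x" by (intro bexI[of _ y]) (auto simp: below_def)
    qed
    have "cof g \<le> otp ?Y" by (rule cof_le) (use cofY in auto)
    also have "otp ?Y = rk (C \<eta>) g" by (rule otp_below)
    also have "\<dots> < rk (C \<eta>) \<eta>" using rk_strict[OF True] g by blast
    also have "\<dots> = otp (C \<eta>)" using otp_rk[OF Cseq_sub[OF C]] by simp
    also have "\<dots> \<le> m" using mb by (simp add: mu_bounded_def)
    finally show False using cg by simp
  qed
next
  case False
  then have nl: "\<not> is_limit_pt (C \<eta>) g" using Cseq_closed[OF C g] by blast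
  show ?thesis
  proof (cases "\<exists>y\<in>C \<eta>. y < g")
    case False then show ?thesis using z by blast
  next
    case True
    then obtain c where "c < g" "\<forall>y\<in>C \<eta>. \<not> (c < y \<and> y < g)" using nl unfolding is_limit_pt_def by blast
    then show ?thesis by (meson not_le)
  qed
qed

lemma small:
  assumes reg: "is_succ_of_regular m" and C: "C_sequence C" and nu: "\<nu> < m"
  shows "{\<xi>. z0 < \<xi> \<and> \<xi> < d \<and> rho1 C \<xi> d \<le> \<nu>} \<prec> below m"
proof -
  define S where "S d = {\<xi>. z0 < \<xi> \<and> \<xi> < d \<and> rho1 C \<xi> d \<le> \<nu>}" for d
  define B where "B = {y. y \<le> \<nu>}"
  define F where "F d = {\<eta> \<in> C d. rk (C d) \<eta> \<le> \<nu>}" for d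
  have sub: "S d \<subseteq> (\<Union>\<eta>\<in>F d. insert \<eta> (S \<eta>))" for d
  proof
    fix \<xi> assume "\<xi> \<in> S d"
    then have x: "z0 < \<xi>" "\<xi> < d" "rho1 C \<xi> d \<le> \<nu>" by (auto simp: S_def)
    define \<eta> where "\<eta> = tr C \<xi> d 1"
    have st: "\<eta> \<in> C d \<and> \<xi> \<le> \<eta> \<and> \<eta> < d" using tr_step[OF C x(1), of d 0] x unfolding \<eta>_def by simp
    have lst: "\<forall>y\<in>C d. \<xi> \<le> y \<longrightarrow> \<eta> \<le> y"
      unfolding \<eta>_def using x(2) by (auto intro: Least_le)
    have h: "\<forall>y\<in>C d. (y < \<eta>) = (y < \<xi>)"
    proof
      fix y assume y: "y \<in> C d"
      show "(y < \<eta>) = (y < \<xi>)"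
      proof
        assume a: "y < \<eta>"
        show "y < \<xi>"
        proof (rule ccontr)
          assume "\<not> y < \<xi>"
          then have "\<xi> \<le> y" by (simp only: not_less)
          then have "\<eta> \<le> y" using lst y by blast
          then show False using a by simp
        qed
      next
        assume "y < \<xi>"
        moreover have "\<xi> \<le> \<eta>" using st by blast
        ultimately show "y < \<eta>" by (rule less_le_trans)
      qed
    qed
    have "C d \<inter> below \<eta> = C d \<inter> below \<xi>"
    proof (rule set_eqI)
      fix y
      show "y \<in> C d \<inter> below \<eta> \<longleftrightarrow> y \<in> C d \<inter> below \<xi>"
        using h unfolding below_def Int_iff mem_Collect_eq by blast
    qed
    then have "rk (C d) \<eta> = rk (C d) \<xi>" using otp_below[of "C d" \<eta>] otp_below[of "C d" \<xi>] by simp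
    also have "\<dots> \<le> rho1 C \<xi> d"
      using rset_0[OF C x(1) x(2)] rho1_rset[OF C x(1)] Max_ge[OF rset_fin[OF C x(1)]] by simp
    finally have \<eta>F: "\<eta> \<in> F d" using st x(3) by (simp add: F_def)
    show "\<xi> \<in> (\<Union>\<eta>\<in>F d. insert \<eta> (S \<eta>))"
    proof (cases "\<xi> = \<eta>")
      case True then show ?thesis using \<eta>F by blast
    next
      case False
      then have \<xi>\<eta>: "\<xi> < \<eta>" using st le_neq_trans by blast
      have "1 \<le> rho2 C \<xi> d" using rho2_pos[OF C x(1) x(2)] by simp
      then have "rset C \<xi> \<eta> \<subseteq> rset C \<xi> d"
        using rset_shift[OF C x(1), of d 1, folded \<eta>_def] x(2) by auto
      then have "rho1 C \<xi> \<eta> \<le> rho1 C \<xi> d"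
        using rho1_rset[OF C x(1)] Max_mono[OF _ rset_ne[OF C x(1) \<xi>\<eta>] rset_fin[OF C x(1)]] by simp
      then have "\<xi> \<in> S \<eta>" using x \<xi>\<eta> by (simp add: S_def)
      then show ?thesis using \<eta>F by blast
    qed
  qed
  have injF: "inj_on (rk (C d)) (F d) \<and> rk (C d) ` F d \<subseteq> B" for d
  proof
    show "inj_on (rk (C d)) (F d)"
    proof (rule inj_onI)
      fix a b assume ab: "a \<in> F d" "b \<in> F d" "rk (C d) a = rk (C d) b"
      show "a = b"
      proof (rule ccontr)
        assume "a \<noteq> b"
        then have "a < b \<or> b < a" by auto
        then show False using rk_less[of a "C d" b] rk_less[of b "C d" a] ab by (auto simp: F_def)
      qed
    qed
    show "rk (C d) ` F d \<subseteq> B" by (auto simp: F_def B_def)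
  qed
  have Fle: "F d \<lesssim> B" for d using injF by (auto simp: lepoll_def)
  have main: "(finite B \<longrightarrow> finite (S d)) \<and> (infinite B \<longrightarrow> S d \<lesssim> B)" for d
  proof (induction d rule: less_induct)
    case (less d)
    have lt: "\<eta> \<in> F d \<Longrightarrow> \<eta> < d" for \<eta> using Cseq_lt[OF C] by (auto simp: F_def)
    show ?case
    proof (intro conjI impI)
      assume fB: "finite B"
      have "finite (F d)" using injF[of d] fB by (meson finite_imageD finite_subset)
      then have "finite (\<Union>\<eta>\<in>F d. insert \<eta> (S \<eta>))" using less lt fB by auto
      then show "finite (S d)" using sub finite_subset by blast
    next
      assume iB: "infinite B"
      have "(\<Union>\<eta>\<in>F d. insert \<eta> (S \<eta>)) \<lesssim> B"
      proof (rule UN_lepoll_inf[OF iB Fle])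
        fix \<eta> assume "\<eta> \<in> F d"
        then have "S \<eta> \<lesssim> B" using less lt iB by blast
        moreover have "{\<eta>} \<lesssim> B" by (rule finite_lepoll_infinite[OF iB]) simp
        ultimately have "{\<eta>} \<union> S \<eta> \<lesssim> B" using Un_lepoll_inf[OF iB] by blast
        then show "insert \<eta> (S \<eta>) \<lesssim> B" by simp
      qed
      then show "S d \<lesssim> B" using lepoll_trans[OF subset_imp_lepoll[OF sub[of d]]] by blast
    qed
  qed
  have Bm: "B \<prec> below m" using atMost_lesspoll[OF reg nu] by (simp add: B_def)
  show ?thesis
  proof (cases "finite B")
    case True
    then have "finite (S d)" using main by blast
    then have "S d \<prec> below m" by (rule fin_lesspoll[OF reg])
    then show ?thesis by (simp only: S_def)
  next
    case False
    then have "S d \<lesssim> B" using main by blast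
    then have "S d \<prec> below m" using Bm by (rule lesspoll_trans1)
    then show ?thesis by (simp only: S_def)
  qed
qed


definition ht :: "('a::wellorder \<Rightarrow> 'b option) \<Rightarrow> 'a" where "ht x = (LEAST g. x g = None)"
definition vl :: "('a \<Rightarrow> 'b option) \<Rightarrow> 'a \<Rightarrow> 'b" where "vl x \<xi> = the (x \<xi>)"
definition restr :: "('a::ord \<Rightarrow> 'b option) \<Rightarrow> 'a \<Rightarrow> 'a \<Rightarrow> 'b option" where
  "restr x q = (\<lambda>\<xi>. if \<xi> < q then x \<xi> else None)"
definition node :: "('a::wellorder \<Rightarrow> 'a set) \<Rightarrow> 'a \<Rightarrow> 'a \<Rightarrow> 'a \<Rightarrow> 'a option" where
  "node C g d = (\<lambda>x. if x < g then Some (rho1 C x d) else None)"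

lemma T_iff: "x \<in> T_rho1 C \<longleftrightarrow> (\<exists>g d. g \<le> d \<and> x = node C g d)"
  by (auto simp: T_rho1_def node_def)

lemma ht_node: "ht (node C g d) = g"
  unfolding ht_def node_def by (rule Least_equality) (auto simp: not_less split: if_splits)

lemma vl_node: "\<xi> < g \<Longrightarrow> vl (node C g d) \<xi> = rho1 C \<xi> d"
  by (simp add: vl_def node_def)

lemma restr_node: "q \<le> g \<Longrightarrow> restr (node C g d) q = node C q d"
  by (auto simp: restr_def node_def fun_eq_iff)

lemma node_z0: "node C z0 d = Map.empty"
  using z0_le by (auto simp: node_def fun_eq_iff not_less)

lemma ht_empty: "ht (Map.empty :: 'a::wellorder \<Rightarrow> 'b option) = z0"
  by (simp add: ht_def z0_def)

lemma node_empty: "node C g d = Map.empty \<Longrightarrow> g = z0"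
proof -
  assume h: "node C g d = Map.empty"
  have "g = ht (node C g d)" by (simp add: ht_node)
  also have "\<dots> = z0" using h ht_empty by metis
  finally show ?thesis .
qed

lemma tl_node:
  assumes "tree_less (node C g d) (node C g' d')"
  shows "g < g' \<and> (\<forall>\<xi><g. rho1 C \<xi> d = rho1 C \<xi> d')"
proof -
  have le: "node C g d \<subseteq>\<^sub>m node C g' d'" and ne: "node C g d \<noteq> node C g' d'"
    using assms by (auto simp: tree_less_def)
  have a: "\<xi> < g \<Longrightarrow> \<xi> < g' \<and> rho1 C \<xi> d = rho1 C \<xi> d'" for \<xi>
  proof -
    assume "\<xi> < g"
    then have "\<xi> \<in> dom (node C g d)" by (simp add: node_def dom_def)
    then have "node C g d \<xi> = node C g' d' \<xi>" using le by (simp add: map_le_def)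
    then show ?thesis using \<open>\<xi> < g\<close> by (simp add: node_def split: if_splits)
  qed
  have "g \<le> g'" using a by (meson not_le order_less_irrefl)
  moreover have "g \<noteq> g'"
  proof
    assume "g = g'"
    then have "node C g d = node C g' d'" using a by (auto simp: node_def fun_eq_iff)
    then show False using ne by simp
  qed
  ultimately show ?thesis using a by simp
qed

lemma osucc_gt: "y < z \<Longrightarrow> y < osucc y"
  unfolding osucc_def by (rule LeastI)

lemma osucc_le: "y < z \<Longrightarrow> osucc y \<le> z"
  unfolding osucc_def by (rule Least_le)

lemma closed_max:
  assumes C: "C_sequence C" and a: "p \<in> C \<eta>" "p \<le> q" "q < \<eta>"
  shows "\<exists>\<alpha>\<in>C \<eta>. p \<le> \<alpha> \<and> \<alpha> \<le> q \<and> (\<forall>y\<in>C \<eta>. p \<le> y \<and> y \<le> q \<longrightarrow> y \<le> \<alpha>)"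
proof -
  let ?Z = "{y\<in>C \<eta>. p \<le> y \<and> y \<le> q}"
  let ?s = "osup ?Z"
  have ub: "\<forall>x\<in>?Z. x \<le> ?s" unfolding osup_def by (rule LeastI[where k=q]) auto
  have sq: "?s \<le> q" unfolding osup_def by (rule Least_le) auto
  have ps: "p \<le> ?s" using ub a by auto
  have "?s \<in> C \<eta>"
  proof (rule ccontr)
    assume ns: "?s \<notin> C \<eta>"
    have "is_limit_pt (C \<eta>) ?s"
      unfolding is_limit_pt_def
    proof
      have "p \<noteq> ?s" using a(1) ns by auto
      then have "p < ?s" using ps le_neq_trans by blast
      then show "\<exists>g\<in>C \<eta>. g < ?s" using a(1) by blast
      show "\<forall>c<?s. \<exists>g\<in>C \<eta>. c < g \<and> g < ?s"
      proof (intro allI impI, rule ccontr)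
        fix c assume c: "c < ?s" "\<not> (\<exists>g\<in>C \<eta>. c < g \<and> g < ?s)"
        have "\<forall>x\<in>?Z. x \<le> c"
        proof
          fix x assume x: "x \<in> ?Z"
          have xs: "x \<le> ?s" using ub x by blast
          have xC: "x \<in> C \<eta>" using x by simp
          then have "x \<noteq> ?s" using ns by auto
          then have "x < ?s" using xs le_neq_trans by blast
          moreover have "\<not> (c < x \<and> x < ?s)" using c(2) xC by blast
          ultimately show "x \<le> c" by (simp add: not_less)
        qed
        then have "?s \<le> c" unfolding osup_def by (rule Least_le)
        then show False using c by simp
      qed
    qed
    moreover have "?s < \<eta>" using sq a(3) by (rule le_less_trans)
    ultimately show False using Cseq_closed[OF C, of ?s \<eta>] ns by blast
  qed
  then show ?thesis using ub ps sq by blast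
qed

definition Xs :: "('a::wellorder \<Rightarrow> 'a option) \<Rightarrow> 'a \<Rightarrow> 'a set" where
  "Xs x \<nu> = {\<xi>. \<xi> < ht x \<and> vl x \<xi> \<le> \<nu>}"
definition cofin :: "'a::wellorder set \<Rightarrow> 'a \<Rightarrow> bool" where
  "cofin A \<gamma> \<longleftrightarrow> (\<forall>b<\<gamma>. \<exists>\<xi>\<in>A. b \<le> \<xi>)"
definition caseA :: "'a::wellorder \<Rightarrow> ('a \<Rightarrow> 'a option) \<Rightarrow> bool" where
  "caseA m x \<longleftrightarrow> (\<exists>\<nu><m. cofin (Xs x \<nu>) (ht x))"
definition nuA :: "'a::wellorder \<Rightarrow> ('a \<Rightarrow> 'a option) \<Rightarrow> 'a" where
  "nuA m x = (SOME \<nu>. \<nu> < m \<and> cofin (Xs x \<nu>) (ht x))"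
definition keyA :: "'a::wellorder \<Rightarrow> ('a \<Rightarrow> 'a option) \<Rightarrow> 'a \<times> 'a" where
  "keyA m x = (nuA m x, otp (Xs x (nuA m x)))"
definition BD :: "'a::wellorder \<Rightarrow> 'a set \<Rightarrow> ('a \<Rightarrow> 'a option) \<Rightarrow> bool" where
  "BD m D x \<longleftrightarrow> ht x \<in> D \<and> cof (ht x) = m"
definition PBD :: "('a::wellorder \<Rightarrow> 'a set) \<Rightarrow> ('a \<Rightarrow> 'a option) \<Rightarrow> 'a \<Rightarrow> bool" where
  "PBD C x p \<longleftrightarrow> p \<in> C (ht x) \<and> z0 < p \<and> p < ht x \<and>
     (\<forall>\<alpha> \<alpha>'. \<alpha> \<in> C (ht x) \<and> \<alpha>' \<in> C (ht x) \<and> p \<le> \<alpha> \<and> \<alpha> < \<alpha>' \<and>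
        (\<forall>y\<in>C (ht x). \<not> (\<alpha> < y \<and> y < \<alpha>')) \<longrightarrow>
        vl x \<alpha> < osucc (vl x \<alpha>) \<and> vl x \<alpha>' = osucc (vl x \<alpha>) \<and>
        (\<forall>\<xi>. \<alpha> < \<xi> \<and> \<xi> < \<alpha>' \<longrightarrow> osucc (vl x \<alpha>) < vl x \<xi>))"
definition pB :: "('a::wellorder \<Rightarrow> 'a set) \<Rightarrow> ('a \<Rightarrow> 'a option) \<Rightarrow> 'a" where
  "pB C x = (SOME p. PBD C x p)"
definition qD :: "'a::wellorder set \<Rightarrow> ('a \<Rightarrow> 'a option) \<Rightarrow> 'a" where
  "qD D x = osup (D \<inter> below (ht x))"
definition fm :: "'a::wellorder \<Rightarrow> ('a \<Rightarrow> 'a set) \<Rightarrow> 'a set \<Rightarrow> ('a \<Rightarrow> 'a option) \<Rightarrow> ('a \<Rightarrow> 'a option)" where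
  "fm m C D x = (if x = Map.empty \<or> ht x = osucc z0 \<or> caseA m x then Map.empty
     else if BD m D x then restr x (pB C x)
     else if (\<exists>d\<in>D. d < ht x) then restr x (qD D x) else Map.empty)"


context
  fixes m :: "'a::wellorder" and C :: "'a \<Rightarrow> 'a set" and D :: "'a set"
  assumes reg: "is_succ_of_regular m"
    and C: "C_sequence C" and mb: "mu_bounded m C"
    and club: "club D"
    and hyp: "\<forall>d\<in>D. cof d = m \<longrightarrow>
           (\<forall>a\<in>C d. \<forall>b\<in>C d. a < b \<and> \<not> (\<exists>x\<in>C d. a < x \<and> x < b) \<longrightarrow>
              osucc (otp (C d \<inter> below a)) < otp (C b \<inter> below a))"
begin

lemma limit_of_cof:
  assumes "cof \<gamma> = m"
  shows "\<forall>y<\<gamma>. \<exists>z. y < z \<and> z < \<gamma>"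
proof (rule ccontr)
  assume "\<not> ?thesis"
  then obtain y where y: "y < \<gamma>" "\<forall>z. y < z \<longrightarrow> \<not> z < \<gamma>" by blast
  have "cof \<gamma> \<le> otp {y}"
    by (rule cof_le) (use y in \<open>auto simp: below_def not_less\<close>)
  also have "otp {y} < m"
  proof (rule otp_lt[of _ \<gamma>])
    show "{y} \<subseteq> below \<gamma>" using y by (simp add: below_def)
    show "{y} \<prec> below m" by (rule fin_lesspoll[OF reg]) simp
  qed
  finally show False using assms by simp
qed

lemma Ccof:
  assumes "\<forall>y<\<gamma>. \<exists>z. y < z \<and> z < \<gamma>" "b < \<gamma>"
  shows "\<exists>y\<in>C \<gamma>. b < y"
proof -
  obtain z where z: "b < z" "z < \<gamma>" using assms by blast
  have "z0 < z" using le_less_trans[OF z0_le[of b]] z by blast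
  then obtain y where "y \<in> C \<gamma>" "z \<le> y" using C_ge[OF C _ z(2)] by blast
  then show ?thesis using z by (meson less_le_trans)
qed

lemma BD_PBD:
  assumes x: "x \<in> T_rho1 C" "x \<noteq> Map.empty" and bd: "BD m D x"
  shows "\<exists>p. PBD C x p"
proof -
  obtain g d where gd: "g \<le> d" "x = node C g d" using x T_iff by blast
  have hx: "ht x = g" using gd ht_node by simp
  have gD: "g \<in> D" "cof g = m" using bd hx by (auto simp: BD_def)
  have zg: "z0 < g" using x(2) gd node_z0 z0_le by (metis order.not_eq_order_implies_strict)
  have lim: "\<forall>y<g. \<exists>z. y < z \<and> z < g" by (rule limit_of_cof[OF gD(2)])
  have cg: "\<forall>b<g. \<exists>y\<in>C g. b < y" using Ccof[OF lim] by blast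
  have "m \<le> otp (C g)"
    using cof_le[OF Cseq_sub[OF C], of g] cg gD(2) by (metis order.strict_implies_order)
  then have mle: "m \<le> rk (C g) g" using otp_rk[OF Cseq_sub[OF C]] by simp
  obtain c lam where c: "c < m" "lam < g"
    and eqn: "\<forall>\<xi>. lam < \<xi> \<and> \<xi> < g \<longrightarrow> rho1 C \<xi> d = max c (rho1 C \<xi> g)"
  proof (cases "g = d")
    case True
    show ?thesis
      by (rule that[of z0 z0]) (use True z0_m[OF reg] zg z0_le in \<open>auto simp: max_def\<close>)
  next
    case False
    then have gd': "g < d" using gd by simp
    let ?k = "rho2 C g d"
    have kpos: "0 < ?k" using rho2_pos[OF C zg gd'] .
    have "\<forall>i. \<exists>b. i < ?k \<longrightarrow> b < g \<and> (\<forall>y\<in>C (tr C g d i). y < g \<longrightarrow> y \<le> b)"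
    proof
      fix i
      show "\<exists>b. i < ?k \<longrightarrow> b < g \<and> (\<forall>y\<in>C (tr C g d i). y < g \<longrightarrow> y \<le> b)"
      proof (cases "i < ?k")
        case True
        then have "g < tr C g d i" using rho2_less[OF C zg gd(1)] by blast
        then show ?thesis using bound_step[OF C mb gD(2) zg] by blast
      qed simp
    qed
    then obtain bf where bf: "\<And>i. i < ?k \<Longrightarrow> bf i < g \<and> (\<forall>y\<in>C (tr C g d i). y < g \<longrightarrow> y \<le> bf i)"
      by metis
    define lam where "lam = Max (bf ` {..<?k})"
    have lam_in: "lam \<in> bf ` {..<?k}" unfolding lam_def using kpos by (intro Max_in) auto
    have lamg: "lam < g" using lam_in bf by auto
    have lamge: "i < ?k \<Longrightarrow> bf i \<le> lam" for i unfolding lam_def by (rule Max_ge) auto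
    show ?thesis
    proof (rule that[of "rho1 C g d" lam])
      show "rho1 C g d < m" by (rule rho1_lt_m[OF C mb zg gd'])
      show "lam < g" by (rule lamg)
      show "\<forall>\<xi>. lam < \<xi> \<and> \<xi> < g \<longrightarrow> rho1 C \<xi> d = max (rho1 C g d) (rho1 C \<xi> g)"
      proof (intro allI impI)
        fix \<xi> assume \<xi>: "lam < \<xi> \<and> \<xi> < g"
        have z\<xi>: "z0 < \<xi>" using le_less_trans[OF z0_le[of lam]] \<xi> by blast
        have H: "\<forall>i<?k. \<forall>y\<in>C (tr C g d i). \<not> (\<xi> \<le> y \<and> y < g)"
          using bf lamge \<xi> by (meson leD order.trans)
        have e1: "rset C \<xi> d = (\<lambda>i. otp (C (tr C g d i) \<inter> below \<xi>)) ` {..<?k} \<union> rset C \<xi> g"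
          by (rule concat_rset[OF C z\<xi> _ gd(1) H]) (use \<xi> in simp)
        have "(\<lambda>i. otp (C (tr C g d i) \<inter> below \<xi>)) ` {..<?k} = (\<lambda>i. otp (C (tr C g d i) \<inter> below g)) ` {..<?k}"
        proof (rule image_cong[OF refl])
          fix i assume "i \<in> {..<?k}"
          then have "C (tr C g d i) \<inter> below \<xi> = C (tr C g d i) \<inter> below g"
            using bf[of i] lamge[of i] \<xi> by (auto simp: below_def)
          then show "otp (C (tr C g d i) \<inter> below \<xi>) = otp (C (tr C g d i) \<inter> below g)" by simp
        qed
        also have "\<dots> = rset C g d" unfolding rset_def[OF C zg] ..
        finally have e2: "rset C \<xi> d = rset C g d \<union> rset C \<xi> g" using e1 by simp
        have "rho1 C \<xi> d = Max (rset C g d \<union> rset C \<xi> g)" using rho1_rset[OF C z\<xi>] e2 by simp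
        also have "\<dots> = max (Max (rset C g d)) (Max (rset C \<xi> g))"
          by (rule Max_Un) (use rset_fin[OF C zg] rset_fin[OF C z\<xi>] rset_ne[OF C zg gd'] rset_ne[OF C z\<xi>] \<xi> in auto)
        also have "\<dots> = max (rho1 C g d) (rho1 C \<xi> g)" using rho1_rset[OF C zg] rho1_rset[OF C z\<xi>] by simp
        finally show "rho1 C \<xi> d = max (rho1 C g d) (rho1 C \<xi> g)" .
      qed
    qed
  qed
  have cg': "c < rk (C g) g" using c mle by simp
  obtain y1 where y1: "y1 \<in> C g" "rk (C g) y1 = c" using rk_down[OF cg'] by blast
  obtain y2 where y2: "y2 \<in> C g" "lam < y2" using cg c(2) by blast
  define p where "p = max y1 y2"
  have p: "p \<in> C g" "lam < p" "c \<le> rk (C g) p"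
    using y1 y2 rk_mono[of y1 p "C g"] by (auto simp: p_def max_def)
  have zp: "z0 < p" using le_less_trans[OF z0_le[of lam]] p by blast
  have pg: "p < g" using Cseq_lt[OF C p(1)] .
  have vx: "\<xi> < g \<Longrightarrow> vl x \<xi> = rho1 C \<xi> d" for \<xi> using gd vl_node by simp
  show ?thesis
  proof (intro exI[of _ p])
    show "PBD C x p"
      unfolding PBD_def hx
    proof (intro conjI allI impI p(1) zp pg)
      fix \<alpha> \<alpha>' assume A: "\<alpha> \<in> C g \<and> \<alpha>' \<in> C g \<and> p \<le> \<alpha> \<and> \<alpha> < \<alpha>' \<and> (\<forall>y\<in>C g. \<not> (\<alpha> < y \<and> y < \<alpha>'))"
      have ag: "\<alpha> < g" "\<alpha>' < g" using A Cseq_lt[OF C] by auto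
      have za: "z0 < \<alpha>" "z0 < \<alpha>'" using zp A by auto
      have la: "lam < \<alpha>" "lam < \<alpha>'" using p(2) A by auto
      have cr: "c \<le> rk (C g) \<alpha>" using p(3) rk_mono[of p \<alpha> "C g"] A by simp
      have v\<alpha>: "vl x \<alpha> = rk (C g) \<alpha>"
        using vx[OF ag(1)] eqn la(1) ag(1) rho1_in_C[OF C za(1)] A cr by (simp add: max_def)
      have h: "osucc (rk (C g) \<alpha>) < rk (C \<alpha>') \<alpha>"
        using hyp gD A otp_below by metis
      have gt: "rk (C g) \<alpha> < osucc (rk (C g) \<alpha>)"
        using osucc_gt rk_less[of \<alpha> "C g" g] A ag by blast
      have s: "rk (C g) \<alpha>' = osucc (rk (C g) \<alpha>)" using rk_succ A by blast
      show "vl x \<alpha> < osucc (vl x \<alpha>)" using v\<alpha> gt by simp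
      have co: "c \<le> osucc (rk (C g) \<alpha>)" using order.trans[OF cr less_imp_le[OF gt]] .
      show "vl x \<alpha>' = osucc (vl x \<alpha>)"
        using vx[OF ag(2)] eqn la(2) ag(2) rho1_in_C[OF C za(2)] A s v\<alpha> co
        by (simp add: max_def)
      fix \<xi> assume \<xi>: "\<alpha> < \<xi> \<and> \<xi> < \<alpha>'"
      have \<xi>g: "\<xi> < g" "lam < \<xi>" "z0 < \<xi>" using \<xi> ag la za by auto
      have "rk (C \<alpha>') \<alpha> \<le> rk (C \<alpha>') \<xi>" using less_imp_le[of \<alpha> \<xi>] \<xi> by (intro rk_mono) blast
      also have "\<dots> \<le> rho1 C \<xi> g" using rho1_between[OF C _ _ _ _ _ \<xi>g(3)] A \<xi> by blast
      also have "\<dots> \<le> vl x \<xi>" using vx[OF \<xi>g(1)] eqn \<xi>g by simp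
      finally show "osucc (vl x \<alpha>) < vl x \<xi>" using h v\<alpha> by simp
    qed
  qed
qed

end


context
  fixes m :: "'a::wellorder" and C :: "'a \<Rightarrow> 'a set" and D :: "'a set"
  assumes reg: "is_succ_of_regular m"
    and C: "C_sequence C" and mb: "mu_bounded m C"
    and club: "club D"
    and hyp: "\<forall>d\<in>D. cof d = m \<longrightarrow>
           (\<forall>a\<in>C d. \<forall>b\<in>C d. a < b \<and> \<not> (\<exists>x\<in>C d. a < x \<and> x < b) \<longrightarrow>
              osucc (otp (C d \<inter> below a)) < otp (C b \<inter> below a))"
begin

lemma PBD_anti:
  assumes s: "s \<in> T_rho1 C" and t: "t \<in> T_rho1 C" and ps: "PBD C s p" and pt: "PBD C t p"
    and cs: "cof (ht s) = m" and tl: "tree_less s t"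
  shows False
proof -
  obtain gs ds where s': "gs \<le> ds" "s = node C gs ds" using s T_iff by blast
  obtain gt dt where t': "gt \<le> dt" "t = node C gt dt" using t T_iff by blast
  have hs: "ht s = gs" "ht t = gt" using s' t' ht_node by auto
  have g: "gs < gt" and req: "\<forall>\<xi><gs. rho1 C \<xi> ds = rho1 C \<xi> dt" using tl_node tl s' t' by blast+
  have veq: "\<xi> < gs \<Longrightarrow> vl s \<xi> = vl t \<xi>" for \<xi>
    using req s' t' vl_node g by (metis order.strict_trans)
  let ?Ct = "C gt" and ?Cs = "C gs"
  have ps': "p \<in> ?Cs" "z0 < p" "p < gs" using ps hs by (auto simp: PBD_def)
  have PS: "\<And>\<alpha> \<alpha>'. \<alpha> \<in> ?Cs \<Longrightarrow> \<alpha>' \<in> ?Cs \<Longrightarrow> p \<le> \<alpha> \<Longrightarrow> \<alpha> < \<alpha>' \<Longrightarrow> (\<forall>y\<in>?Cs. \<not> (\<alpha> < y \<and> y < \<alpha>')) \<Longrightarrow>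
        vl s \<alpha>' = osucc (vl s \<alpha>) \<and> (\<forall>\<xi>. \<alpha> < \<xi> \<and> \<xi> < \<alpha>' \<longrightarrow> osucc (vl s \<alpha>) < vl s \<xi>)"
    using ps hs unfolding PBD_def by blast
  have pt': "p \<in> ?Ct" using pt hs by (auto simp: PBD_def)
  have PT: "\<And>\<alpha> \<alpha>'. \<alpha> \<in> ?Ct \<Longrightarrow> \<alpha>' \<in> ?Ct \<Longrightarrow> p \<le> \<alpha> \<Longrightarrow> \<alpha> < \<alpha>' \<Longrightarrow> (\<forall>y\<in>?Ct. \<not> (\<alpha> < y \<and> y < \<alpha>')) \<Longrightarrow>
        vl t \<alpha> < osucc (vl t \<alpha>) \<and> (\<forall>\<xi>. \<alpha> < \<xi> \<and> \<xi> < \<alpha>' \<longrightarrow> osucc (vl t \<alpha>) < vl t \<xi>)"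
    using pt hs unfolding PBD_def by blast
  have cs': "cof gs = m" using cs hs by simp
  have zs: "z0 < gs" using le_less_trans[OF z0_le[of p]] ps'(2) ps'(3) by (meson less_trans)
  have nl: "\<not> is_limit_pt ?Ct gs"
  proof
    assume lp: "is_limit_pt ?Ct gs"
    then have gsC: "gs \<in> ?Ct" using Cseq_closed[OF C g] by blast
    let ?Y = "?Ct \<inter> below gs"
    have cofY: "\<forall>b<gs. \<exists>x\<in>?Y. b \<le> x"
    proof (intro allI impI)
      fix b assume "b < gs"
      then obtain y where "y \<in> ?Ct" "b < y" "y < gs" using lp unfolding is_limit_pt_def by blast
      then show "\<exists>x\<in>?Y. b \<le> x" by (intro bexI[of _ y]) (auto simp: below_def)
    qed
    have "cof gs \<le> otp ?Y" by (rule cof_le) (use cofY in auto)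
    also have "otp ?Y = rk ?Ct gs" by (rule otp_below)
    also have "\<dots> < rk ?Ct gt" using rk_strict[OF gsC] g by blast
    also have "\<dots> = otp ?Ct" using otp_rk[OF Cseq_sub[OF C]] by simp
    also have "\<dots> \<le> m" using mb by (simp add: mu_bounded_def)
    finally show False using cs' by simp
  qed
  have "\<exists>g\<in>?Ct. g < gs" using pt' ps'(3) by blast
  then obtain b where b: "b < gs" "\<forall>y\<in>?Ct. \<not> (b < y \<and> y < gs)"
    using nl unfolding is_limit_pt_def by blast
  define b' where "b' = max b p"
  have b'gs: "b' < gs" using b ps' by (simp add: b'_def)
  have "p \<le> b'" by (simp add: b'_def)
  moreover have "b' < gt" using b'gs g by simp
  ultimately obtain \<alpha> where \<alpha>: "\<alpha> \<in> ?Ct" "p \<le> \<alpha>" "\<alpha> \<le> b'" "\<forall>y\<in>?Ct. p \<le> y \<and> y \<le> b' \<longrightarrow> y \<le> \<alpha>"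
    using closed_max[OF C pt'] by blast
  have \<alpha>gs: "\<alpha> < gs" using \<alpha>(3) b'gs by simp
  have gap: "\<forall>y\<in>?Ct. \<alpha> < y \<longrightarrow> gs \<le> y"
  proof (intro ballI impI)
    fix y assume y: "y \<in> ?Ct" "\<alpha> < y"
    show "gs \<le> y"
    proof (rule ccontr)
      assume "\<not> gs \<le> y"
      then have ygs: "y < gs" by simp
      show False
      proof (cases "y \<le> b'")
        case True
        then have "y \<le> \<alpha>" using \<alpha>(4) y \<alpha>(2) by (meson less_imp_le order.trans)
        then show False using y by simp
      next
        case False
        then have "b < y" by (simp add: b'_def not_le max_less_iff_conj)
        then show False using b(2) y ygs by blast
      qed
    qed
  qed
  obtain y0 where y0: "y0 \<in> ?Ct" "gs \<le> y0" using C_ge[OF C zs g] by blast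
  define \<beta> where "\<beta> = (LEAST y. y \<in> ?Ct \<and> \<alpha> < y)"
  have \<beta>: "\<beta> \<in> ?Ct \<and> \<alpha> < \<beta>" unfolding \<beta>_def
    by (rule LeastI[where k=y0]) (use y0 \<alpha>gs in auto)
  have \<beta>min: "\<forall>y\<in>?Ct. \<not> (\<alpha> < y \<and> y < \<beta>)"
    unfolding \<beta>_def using not_less_Least by blast
  have gs\<beta>: "gs \<le> \<beta>" using gap \<beta> by blast
  have tprop: "vl t \<alpha> < osucc (vl t \<alpha>) \<and> (\<forall>\<xi>. \<alpha> < \<xi> \<and> \<xi> < \<beta> \<longrightarrow> osucc (vl t \<alpha>) < vl t \<xi>)"
    using PT[OF \<alpha>(1) _ \<alpha>(2) _ \<beta>min] \<beta> by blast
  obtain \<alpha>s where \<alpha>s: "\<alpha>s \<in> ?Cs" "p \<le> \<alpha>s" "\<alpha>s \<le> \<alpha>" "\<forall>y\<in>?Cs. p \<le> y \<and> y \<le> \<alpha> \<longrightarrow> y \<le> \<alpha>s"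
    using closed_max[OF C ps'(1) \<alpha>(2) \<alpha>gs] by blast
  have lims: "\<forall>y<gs. \<exists>z. y < z \<and> z < gs" by (rule limit_of_cof[OF reg C mb club hyp cs'])
  obtain y1 where y1: "y1 \<in> ?Cs" "\<alpha> < y1" using Ccof[OF reg C mb club hyp lims \<alpha>gs] by blast
  define \<alpha>2 where "\<alpha>2 = (LEAST y. y \<in> ?Cs \<and> \<alpha> < y)"
  have \<alpha>2: "\<alpha>2 \<in> ?Cs \<and> \<alpha> < \<alpha>2" unfolding \<alpha>2_def
    by (rule LeastI[where k=y1]) (use y1 in auto)
  have \<alpha>2min: "\<forall>y\<in>?Cs. \<not> (\<alpha> < y \<and> y < \<alpha>2)"
    unfolding \<alpha>2_def using not_less_Least by blast
  have \<alpha>2gs: "\<alpha>2 < gs" using Cseq_lt[OF C] \<alpha>2 by blast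
  have succ: "\<forall>y\<in>?Cs. \<not> (\<alpha>s < y \<and> y < \<alpha>2)"
  proof (intro ballI notI)
    fix y assume y: "y \<in> ?Cs" "\<alpha>s < y \<and> y < \<alpha>2"
    show False
    proof (cases "y \<le> \<alpha>")
      case True
      then have "y \<le> \<alpha>s" using \<alpha>s(4) y \<alpha>s(2) by (meson less_imp_le order.trans)
      then show False using y leD by blast
    next
      case False
      then show False using \<alpha>2min y by (simp add: not_le)
    qed
  qed
  have \<alpha>s\<alpha>2: "\<alpha>s < \<alpha>2" using \<alpha>s(3) \<alpha>2 by (meson le_less_trans)
  have sprop: "vl s \<alpha>2 = osucc (vl s \<alpha>s) \<and> (\<forall>\<xi>. \<alpha>s < \<xi> \<and> \<xi> < \<alpha>2 \<longrightarrow> osucc (vl s \<alpha>s) < vl s \<xi>)"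
    using PS[OF \<alpha>s(1) _ \<alpha>s(2) \<alpha>s\<alpha>2 succ] \<alpha>2 by blast
  have in\<beta>: "\<alpha> < \<alpha>2 \<and> \<alpha>2 < \<beta>" using \<alpha>2 \<alpha>2gs gs\<beta> by (meson less_le_trans)
  have t2: "osucc (vl t \<alpha>) < vl t \<alpha>2" using tprop in\<beta> by blast
  have e2: "vl s \<alpha>2 = vl t \<alpha>2" using veq \<alpha>2gs by blast
  have e1: "vl s \<alpha> = vl t \<alpha>" using veq \<alpha>gs by blast
  show False
  proof (cases "\<alpha>s = \<alpha>")
    case True
    then have "vl s \<alpha>2 = osucc (vl t \<alpha>)" using sprop e1 by simp
    then show False using t2 e2 by simp
  next
    case False
    then have "\<alpha>s < \<alpha>" using \<alpha>s(3) by simp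
    then have "osucc (vl s \<alpha>s) < vl s \<alpha>" using sprop \<alpha>2 by blast
    then have "vl t \<alpha>2 < vl t \<alpha>" using sprop e1 e2 by simp
    moreover have "vl t \<alpha> < osucc (vl t \<alpha>)" using tprop by blast
    ultimately show False using t2 by simp
  qed
qed

end


context
  fixes m :: "'a::wellorder" and C :: "'a \<Rightarrow> 'a set" and D :: "'a set"
  assumes reg: "is_succ_of_regular m"
    and C: "C_sequence C" and mb: "mu_bounded m C"
    and club: "club D"
    and hyp: "\<forall>d\<in>D. cof d = m \<longrightarrow>
           (\<forall>a\<in>C d. \<forall>b\<in>C d. a < b \<and> \<not> (\<exists>x\<in>C d. a < x \<and> x < b) \<longrightarrow>
              osucc (otp (C d \<inter> below a)) < otp (C b \<inter> below a))"
begin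

lemma nuA_prop: "caseA m x \<Longrightarrow> nuA m x < m \<and> cofin (Xs x (nuA m x)) (ht x)"
  unfolding caseA_def nuA_def by (rule someI_ex) blast

lemma A_anti:
  assumes s: "s \<in> T_rho1 C" and t: "t \<in> T_rho1 C" and as: "caseA m s" and at: "caseA m t"
    and k: "keyA m s = keyA m t" and tl: "tree_less s t"
  shows False
proof -
  obtain gs ds where s': "gs \<le> ds" "s = node C gs ds" using s T_iff by blast
  obtain gt dt where t': "gt \<le> dt" "t = node C gt dt" using t T_iff by blast
  have hs: "ht s = gs" "ht t = gt" using s' t' ht_node by auto
  have g: "gs < gt" and req: "\<forall>\<xi><gs. rho1 C \<xi> ds = rho1 C \<xi> dt" using tl_node tl s' t' by blast+
  have veq: "\<xi> < gs \<Longrightarrow> vl s \<xi> = vl t \<xi>" for \<xi>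
    using req s' t' vl_node g by (metis order.strict_trans)
  define \<nu> where "\<nu> = nuA m t"
  have nus: "nuA m s = \<nu>" using k by (simp add: keyA_def \<nu>_def)
  have ct: "cofin (Xs t \<nu>) gt" using nuA_prop[OF at] hs by (simp add: \<nu>_def)
  have XS: "Xs s \<nu> = Xs t \<nu> \<inter> below gs"
  proof (rule set_eqI)
    fix \<xi>
    show "\<xi> \<in> Xs s \<nu> \<longleftrightarrow> \<xi> \<in> Xs t \<nu> \<inter> below gs"
    proof
      assume "\<xi> \<in> Xs s \<nu>"
      then have a: "\<xi> < gs" "vl s \<xi> \<le> \<nu>" using hs by (auto simp: Xs_def)
      have "\<xi> < gt" using a(1) g by (rule less_trans)
      then show "\<xi> \<in> Xs t \<nu> \<inter> below gs" using a veq[OF a(1)] hs by (auto simp: Xs_def below_def)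
    next
      assume "\<xi> \<in> Xs t \<nu> \<inter> below gs"
      then have a: "\<xi> < gs" "vl t \<xi> \<le> \<nu>" using hs by (auto simp: Xs_def below_def)
      then show "\<xi> \<in> Xs s \<nu>" using veq[OF a(1)] hs by (auto simp: Xs_def)
    qed
  qed
  have o1: "otp (Xs s \<nu>) = rk (Xs t \<nu>) gs" using XS otp_below by simp
  obtain y where y: "y \<in> Xs t \<nu>" "gs \<le> y" using ct g unfolding cofin_def by blast
  have ygt: "y < gt" using y hs by (simp add: Xs_def)
  have "rk (Xs t \<nu>) gs < rk (Xs t \<nu>) gt" by (rule rk_strict[OF y ygt])
  also have "\<dots> = otp (Xs t \<nu>)"
    by (rule otp_rk[symmetric]) (use hs in \<open>auto simp: Xs_def below_def\<close>)
  finally have "otp (Xs s \<nu>) < otp (Xs t \<nu>)" using o1 by simp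
  moreover have "otp (Xs s \<nu>) = otp (Xs t \<nu>)" using k nus by (simp add: keyA_def \<nu>_def)
  ultimately show False by simp
qed

lemma key_range:
  assumes x: "x \<in> T_rho1 C" and a: "caseA m x"
  shows "keyA m x \<in> below m \<times> below m"
proof -
  obtain g d where gd: "g \<le> d" "x = node C g d" using x T_iff by blast
  have hx: "ht x = g" using gd ht_node by simp
  define \<nu> where "\<nu> = nuA m x"
  have nu: "\<nu> < m" using nuA_prop[OF a] by (simp add: \<nu>_def)
  have sub: "Xs x \<nu> \<subseteq> insert z0 {\<xi>. z0 < \<xi> \<and> \<xi> < d \<and> rho1 C \<xi> d \<le> \<nu>}"
  proof
    fix \<xi> assume "\<xi> \<in> Xs x \<nu>"
    then have a: "\<xi> < g" "vl x \<xi> \<le> \<nu>" using hx by (auto simp: Xs_def)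
    have "\<xi> < d" using a(1) gd(1) by (rule less_le_trans)
    moreover have "rho1 C \<xi> d \<le> \<nu>" using a(2) vl_node[OF a(1), of C d] gd(2) by simp
    moreover have "\<xi> = z0 \<or> z0 < \<xi>" using z0_le[of \<xi>] le_neq_trans by blast
    ultimately show "\<xi> \<in> insert z0 {\<xi>. z0 < \<xi> \<and> \<xi> < d \<and> rho1 C \<xi> d \<le> \<nu>}" by blast
  qed
  have "insert z0 {\<xi>. z0 < \<xi> \<and> \<xi> < d \<and> rho1 C \<xi> d \<le> \<nu>} \<prec> below m"
    by (rule insert_lesspoll[OF reg small[OF reg C nu]])
  then have "Xs x \<nu> \<prec> below m" using lesspoll_trans1[OF subset_imp_lepoll[OF sub]] by blast
  then have "otp (Xs x \<nu>) < m"
    by (intro otp_lt[of _ g]) (use hx in \<open>auto simp: Xs_def below_def\<close>)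
  then show ?thesis using nu by (simp add: keyA_def \<nu>_def below_def)
qed

lemma notA:
  assumes x: "x \<in> T_rho1 C" "x \<noteq> Map.empty" "ht x \<noteq> osucc z0" "\<not> caseA m x"
  shows "(\<forall>y<ht x. \<exists>z. y < z \<and> z < ht x) \<and> cof (ht x) = m"
proof -
  obtain g d where gd: "g \<le> d" "x = node C g d" using x T_iff by blast
  have hx: "ht x = g" using gd ht_node by simp
  have gz: "g \<noteq> z0" using x(2) gd node_z0 by blast
  have vx: "\<xi> < g \<Longrightarrow> vl x \<xi> = rho1 C \<xi> d" for \<xi> using gd vl_node by simp
  have lim: "\<forall>y<g. \<exists>z. y < z \<and> z < g"
  proof (rule ccontr)
    assume "\<not> ?thesis"
    then obtain y where y: "y < g" "\<forall>z. y < z \<longrightarrow> \<not> z < g" by blast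
    show False
    proof (cases "y = z0")
      case True
      have "osucc z0 = g" unfolding osucc_def
      proof (rule Least_equality)
        show "z0 < g" using y True by simp
        fix z :: 'a assume "z0 < z" then show "g \<le> z" using y True by (simp add: not_less)
      qed
      then show False using x(3) hx by simp
    next
      case False
      then have zy: "z0 < y" using z0_le[of y] le_neq_trans by metis
      have yd: "y < d" using y(1) gd(1) by (rule less_le_trans)
      define \<nu> where "\<nu> = vl x y"
      have nu: "\<nu> < m" using rho1_lt_m[OF C mb zy yd] vx[OF y(1)] by (simp add: \<nu>_def)
      have "cofin (Xs x \<nu>) g" unfolding cofin_def
      proof (intro allI impI)
        fix b assume "b < g"
        then have "b \<le> y" using y(2) by (meson not_le)
        moreover have "y \<in> Xs x \<nu>" using y(1) hx by (simp add: Xs_def \<nu>_def)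
        ultimately show "\<exists>\<xi>\<in>Xs x \<nu>. b \<le> \<xi>" by blast
      qed
      then show False using x(4) nu hx by (auto simp: caseA_def)
    qed
  qed
  have Cg1: "C g \<subseteq> below g" using Cseq_sub[OF C] .
  have Cg2: "\<forall>b<g. \<exists>y\<in>C g. b \<le> y"
  proof (intro allI impI)
    fix b assume "b < g"
    then obtain y where "y \<in> C g" "b < y" using Ccof[OF reg C mb club hyp lim] by blast
    then show "\<exists>y\<in>C g. b \<le> y" using less_imp_le by blast
  qed
  note Cg = Cg1 Cg2
  have le1: "cof g \<le> m"
  proof -
    have "cof g \<le> otp (C g)" by (rule cof_le[OF Cg])
    also have "\<dots> \<le> m" using mb by (simp add: mu_bounded_def)
    finally show ?thesis .
  qed
  have "\<exists>X\<subseteq>below g. (\<forall>b<g. \<exists>x\<in>X. b \<le> x) \<and> otp X = cof g"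
    unfolding cof_def by (rule LeastI[where k="otp (C g)"]) (use Cg in blast)
  then obtain X where X: "X \<subseteq> below g" "\<forall>b<g. \<exists>x\<in>X. b \<le> x" "otp X = cof g" by blast
  have cofg: "cof g = m"
  proof (rule ccontr)
    assume "cof g \<noteq> m"
    then have lt: "otp X < m" using le1 X(3) by simp
    have Xm: "X \<prec> below m" using otp_eqpoll[OF X(1)] reg_lt[OF reg lt] eq_lesspoll_trans by blast
    define V where "V = (\<lambda>\<xi>. rho1 C \<xi> d) ` (X - {z0})"
    have VX: "V \<lesssim> X" unfolding V_def
      using lepoll_trans[OF image_lepoll subset_imp_lepoll[of "X - {z0}" X]] by blast
    have Vm: "V \<subseteq> below m"
    proof
      fix v assume "v \<in> V"
      then obtain \<xi> where \<xi>: "\<xi> \<in> X" "\<xi> \<noteq> z0" "v = rho1 C \<xi> d" by (auto simp: V_def)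
      have "z0 < \<xi>" using \<xi>(2) z0_le[of \<xi>] le_neq_trans by metis
      moreover have "\<xi> < d" using \<xi>(1) X(1) gd(1) by (auto simp: below_def intro: less_le_trans)
      ultimately show "v \<in> below m" using rho1_lt_m[OF C mb] \<xi>(3) by (simp add: below_def)
    qed
    have "\<not> (\<forall>\<nu><m. \<exists>v\<in>V. \<nu> \<le> v)"
    proof
      assume "\<forall>\<nu><m. \<exists>v\<in>V. \<nu> \<le> v"
      then have "V \<approx> below m" using reg_cof[OF reg Vm] by blast
      then have "below m \<lesssim> X" using VX eqpoll_sym lepoll_trans1 by blast
      then have "X \<approx> below m" using Xm lepoll_antisym lesspoll_def by blast
      then show False using Xm lesspoll_def by blast
    qed
    then obtain \<nu> where nu: "\<nu> < m" "\<forall>v\<in>V. \<not> \<nu> \<le> v" by blast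
    have "cofin (Xs x \<nu>) g" unfolding cofin_def
    proof (intro allI impI)
      fix b assume "b < g"
      then obtain z where z: "b < z" "z < g" using lim by blast
      then obtain \<xi> where \<xi>: "\<xi> \<in> X" "z \<le> \<xi>" using X(2) by blast
      have \<xi>g: "\<xi> < g" using \<xi>(1) X(1) by (auto simp: below_def)
      have b\<xi>: "b < \<xi>" using z(1) \<xi>(2) by (rule less_le_trans)
      then have "\<xi> \<noteq> z0" using z0_le[of b] by (metis leD)
      then have "vl x \<xi> \<in> V" using \<xi>(1) vx[OF \<xi>g] by (simp add: V_def)
      then have "vl x \<xi> \<le> \<nu>" using nu(2) by (meson not_le less_imp_le)
      then have "\<xi> \<in> Xs x \<nu>" using \<xi>g hx by (simp add: Xs_def)
      then show "\<exists>\<xi>\<in>Xs x \<nu>. b \<le> \<xi>" using b\<xi> less_imp_le by blast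
    qed
    then show False using x(4) nu(1) hx by (auto simp: caseA_def)
  qed
  show ?thesis using lim cofg hx by simp
qed

lemma qD_prop:
  assumes "ht x \<notin> D" "\<exists>d\<in>D. d < ht x"
  shows "qD D x < ht x \<and> (\<forall>d\<in>D. d < ht x \<longrightarrow> d \<le> qD D x)"
proof -
  let ?g = "ht x"
  let ?Z = "D \<inter> below ?g"
  have ub: "\<forall>d\<in>?Z. d \<le> qD D x" unfolding qD_def osup_def
    by (rule LeastI[where k="?g"]) (auto simp: below_def)
  have qg: "qD D x \<le> ?g" unfolding qD_def osup_def
    by (rule Least_le) (auto simp: below_def)
  have "qD D x \<noteq> ?g"
  proof
    assume e: "qD D x = ?g"
    have "is_limit_pt D ?g" unfolding is_limit_pt_def
    proof
      show "\<exists>g\<in>D. g < ?g" using assms(2) .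
      show "\<forall>b<?g. \<exists>g\<in>D. b < g \<and> g < ?g"
      proof (intro allI impI, rule ccontr)
        fix b assume b: "b < ?g" "\<not> (\<exists>g\<in>D. b < g \<and> g < ?g)"
        have "\<forall>d\<in>?Z. d \<le> b" using b(2) by (auto simp: below_def not_less)
        then have "qD D x \<le> b" unfolding qD_def osup_def by (rule Least_le)
        then show False using e b(1) by simp
      qed
    qed
    then show False using club assms(1) by (simp add: club_def)
  qed
  then show ?thesis using ub qg by (auto simp: below_def)
qed

end


theorem lemma6p4:
  fixes m :: "'a::wellorder" and C :: "'a \<Rightarrow> 'a set" and D :: "'a set"
  assumes "is_succ_of_regular m"
    and "C_sequence C" and "mu_bounded m C" and "weakly_coherent m C"
    and "club D"
    and "\<forall>d\<in>D. cof d = m \<longrightarrow>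
           (\<forall>a\<in>C d. \<forall>b\<in>C d. a < b \<and> \<not> (\<exists>x\<in>C d. a < x \<and> x < b) \<longrightarrow>
              osucc (otp (C d \<inter> below a)) < otp (C b \<inter> below a))"
  shows "special m (T_rho1 C)"
proof -
  note reg = assms(1) and C = assms(2) and mb = assms(3) and club = assms(5) and hyp = assms(6)
  note ctx = reg C mb club hyp
  let ?T = "T_rho1 C"
  let ?f = "fm m C D"
  have Tnode: "\<exists>g d. g \<le> d \<and> x = node C g d" if "x \<in> ?T" for x
    using that by (simp only: T_iff)
  have rootT: "(Map.empty :: 'a \<Rightarrow> 'a option) \<in> ?T"
  proof -
    have "z0 \<le> (z0::'a) \<and> Map.empty = node C z0 z0" using node_z0[of C z0] by simp
    then show ?thesis unfolding T_iff by blast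
  qed
  have restrT: "restr x q \<in> ?T \<and> ht (restr x q) = q" if hx: "x \<in> ?T" "q \<le> ht x" for x q
  proof -
    obtain g d where gd: "g \<le> d" "x = node C g d" using Tnode[OF hx(1)] by blast
    have "q \<le> g" using hx(2) gd(2) ht_node[of C g d] by simp
    then have e: "restr x q = node C q d" using gd restr_node by simp
    have "q \<le> d" using \<open>q \<le> g\<close> gd(1) by (rule order.trans)
    then have "node C q d \<in> ?T" unfolding T_iff by blast
    moreover have "ht (node C q d) = q" by (rule ht_node)
    ultimately show ?thesis using e by simp
  qed
  have restr_less: "tree_less (restr x q) x" if hx: "x \<in> ?T" "q < ht x" for x q
  proof -
    obtain g d where gd: "g \<le> d" "x = node C g d" using Tnode[OF hx(1)] by blast
    have qg: "q < g" using hx(2) gd(2) ht_node[of C g d] by simp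
    have "restr x q \<subseteq>\<^sub>m x" by (auto simp: map_le_def restr_def dom_def split: if_splits)
    moreover have "restr x q q = None" by (simp add: restr_def)
    moreover have "x q \<noteq> None" using qg gd by (simp add: node_def)
    ultimately show ?thesis unfolding tree_less_def by auto
  qed
  have empty_less: "tree_less Map.empty x" if "x \<noteq> Map.empty" for x :: "'a \<Rightarrow> 'a option"
    using that by (simp add: tree_less_def)
  have no_less_empty: "\<not> tree_less y Map.empty" for y :: "'a \<Rightarrow> 'a option"
    by (auto simp: tree_less_def map_le_def fun_eq_iff dom_def)
  have pBp: "PBD C x (pB C x)" if "x \<in> ?T" "x \<noteq> Map.empty" "BD m D x" for x
    unfolding pB_def by (rule someI_ex) (rule BD_PBD[OF ctx that])
  have htD: "ht x \<notin> D" if "x \<in> ?T" "x \<noteq> Map.empty" "ht x \<noteq> osucc z0" "\<not> caseA m x" "\<not> BD m D x" for x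
    using notA[OF ctx that(1-4)] that(5) by (auto simp: BD_def)
  have fT: "?f x \<in> ?T \<and> (x \<noteq> Map.empty \<longrightarrow> tree_less (?f x) x)" if x: "x \<in> ?T" for x
  proof (cases "x = Map.empty \<or> ht x = osucc z0 \<or> caseA m x")
    case True
    then have "?f x = Map.empty" by (simp add: fm_def)
    then show ?thesis using rootT empty_less by simp
  next
    case False
    then have nA: "x \<noteq> Map.empty" "ht x \<noteq> osucc z0" "\<not> caseA m x" by auto
    show ?thesis
    proof (cases "BD m D x")
      case True
      then have e: "?f x = restr x (pB C x)" using False by (simp add: fm_def)
      have "pB C x < ht x" using pBp[OF x nA(1) True] by (simp add: PBD_def)
      then show ?thesis using e restrT[OF x] restr_less[OF x] less_imp_le by metis
    next
      case nB: False
      show ?thesis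
      proof (cases "\<exists>d\<in>D. d < ht x")
        case True
        then have e: "?f x = restr x (qD D x)" using False nB by (simp add: fm_def)
        have "qD D x < ht x" using qD_prop[OF ctx htD[OF x nA nB] True] by blast
        then show ?thesis using e restrT[OF x] restr_less[OF x] less_imp_le by metis
      next
        case nD: False
        then have "?f x = Map.empty" using False nB by (simp add: fm_def)
        then show ?thesis using rootT empty_less by simp
      qed
    qed
  qed
  have fib: "\<exists>\<A>. \<A> \<lesssim> below m \<and> (\<forall>A\<in>\<A>. antichain_t A) \<and> {x\<in>?T. ?f x = z} \<subseteq> \<Union>\<A>"
    if z: "z \<in> ?T" for z
  proof -
    obtain w where w: "ht z < w" using no_max[OF reg] by blast
    obtain d0 where d0: "d0 \<in> D" "w \<le> d0" using club by (auto simp: club_def)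
    define dz where "dz = (LEAST d. d \<in> D \<and> ht z < d)"
    have dz: "dz \<in> D \<and> ht z < dz" unfolding dz_def
      by (rule LeastI[where k=d0]) (use d0 w in \<open>auto intro: less_le_trans\<close>)
    define K where "K = (\<lambda>k. {x\<in>?T. caseA m x \<and> keyA m x = k}) ` (below m \<times> below m)"
    define L where "L = (\<lambda>\<gamma>. {x\<in>?T. ht x = \<gamma>}) ` {\<gamma>. \<gamma> \<le> dz}"
    define BDF where "BDF = {x\<in>?T. BD m D x \<and> \<not> caseA m x \<and> x \<noteq> Map.empty \<and> ht x \<noteq> osucc z0 \<and> ?f x = z}"
    have card: "K \<union> L \<union> {BDF} \<lesssim> below m"
    proof -
      have "K \<lesssim> below m \<times> below m" unfolding K_def by (rule image_lepoll)
      then have K: "K \<lesssim> below m" using times_lepoll_inf[OF reg_inf[OF reg]] lepoll_trans by blast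
      have "L \<lesssim> {\<gamma>. \<gamma> \<le> dz}" unfolding L_def by (rule image_lepoll)
      then have L: "L \<lesssim> below m" using atMost_lepoll[OF reg] lepoll_trans by blast
      have B: "{BDF} \<lesssim> below m" by (rule fin_lepoll[OF reg]) simp
      show ?thesis by (intro Un_lepoll_inf[OF reg_inf[OF reg]] K L B)
    qed
    have anti: "\<forall>A\<in>K \<union> L \<union> {BDF}. antichain_t A"
    proof
      fix A assume "A \<in> K \<union> L \<union> {BDF}"
      then consider (k) k where "A = {x\<in>?T. caseA m x \<and> keyA m x = k}"
        | (l) \<gamma> where "A = {x\<in>?T. ht x = \<gamma>}" | (b) "A = BDF"
        unfolding K_def L_def by blast
      then show "antichain_t A"
      proof cases
        case k
        show ?thesis unfolding antichain_t_def
        proof (intro ballI notI)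
          fix s t assume st: "s \<in> A" "t \<in> A" "tree_less s t"
          have S: "s \<in> ?T" "caseA m s" "keyA m s = k" using st(1) k by auto
          have TT: "t \<in> ?T" "caseA m t" "keyA m t = k" using st(2) k by auto
          have "keyA m s = keyA m t" using S(3) TT(3) by simp
          then show False by (rule A_anti[OF ctx S(1) TT(1) S(2) TT(2) _ st(3)])
        qed
      next
        case l
        show ?thesis unfolding antichain_t_def
        proof (intro ballI notI)
          fix s t assume st: "s \<in> A" "t \<in> A" "tree_less s t"
          obtain gs ds where s': "gs \<le> ds" "s = node C gs ds" using st(1) l Tnode by blast
          obtain gt dt where t': "gt \<le> dt" "t = node C gt dt" using st(2) l Tnode by blast
          have "gs < gt" using tl_node st(3) s' t' by blast
          moreover have "gs = gt" using st l s' t' ht_node[of C gs ds] ht_node[of C gt dt] by simp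
          ultimately show False by simp
        qed
      next
        case b
        show ?thesis unfolding antichain_t_def
        proof (intro ballI notI)
          fix s t assume st: "s \<in> A" "t \<in> A" "tree_less s t"
          have S: "s \<in> ?T" "BD m D s" "\<not> caseA m s" "s \<noteq> Map.empty" "ht s \<noteq> osucc z0" "?f s = z"
            using st(1) b by (auto simp: BDF_def)
          have TT: "t \<in> ?T" "BD m D t" "\<not> caseA m t" "t \<noteq> Map.empty" "ht t \<noteq> osucc z0" "?f t = z"
            using st(2) b by (auto simp: BDF_def)
          have ps: "PBD C s (pB C s)" by (rule pBp[OF S(1) S(4) S(2)])
          have pt: "PBD C t (pB C t)" by (rule pBp[OF TT(1) TT(4) TT(2)])
          have fs: "?f s = restr s (pB C s)" using S by (simp add: fm_def)
          have ft: "?f t = restr t (pB C t)" using TT by (simp add: fm_def)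
          have "ht (restr s (pB C s)) = pB C s" using restrT[OF S(1)] ps less_imp_le by (metis PBD_def)
          moreover have "ht (restr t (pB C t)) = pB C t" using restrT[OF TT(1)] pt less_imp_le by (metis PBD_def)
          ultimately have "pB C s = pB C t" using fs ft S(6) TT(6) by metis
          then have pt': "PBD C t (pB C s)" using pt by simp
          have "cof (ht s) = m" using S(2) by (simp add: BD_def)
          then show False using PBD_anti[OF ctx S(1) TT(1) ps pt' _ st(3)] by blast
        qed
      qed
    qed
    have cover: "{x\<in>?T. ?f x = z} \<subseteq> \<Union>(K \<union> L \<union> {BDF})"
    proof
      fix x assume "x \<in> {x\<in>?T. ?f x = z}"
      then have x: "x \<in> ?T" "?f x = z" by auto
      have inL: "x \<in> \<Union>(K \<union> L \<union> {BDF})" if "ht x \<le> dz"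
        using that x(1) unfolding L_def by blast
      show "x \<in> \<Union>(K \<union> L \<union> {BDF})"
      proof (cases "caseA m x")
        case True
        then have "keyA m x \<in> below m \<times> below m" by (rule key_range[OF ctx x(1)])
        then show ?thesis using x(1) True unfolding K_def by blast
      next
        case nA: False
        show ?thesis
        proof (cases "x = Map.empty \<or> ht x = osucc z0")
          case True
          then have "z = Map.empty" using x(2) by (auto simp: fm_def)
          have he: "ht (Map.empty :: 'a \<Rightarrow> 'a option) = z0" by (rule ht_empty)
          have "z0 < dz" using dz he \<open>z = Map.empty\<close> by simp
          have "ht x = z0 \<or> ht x = osucc z0" using True he by auto
          then show ?thesis
          proof
            assume "ht x = z0" then have "ht x \<le> dz" using z0_le[of dz] by simp
            then show ?thesis by (rule inL)
          next
            assume "ht x = osucc z0" then have "ht x \<le> dz" using osucc_le[OF \<open>z0 < dz\<close>] by simp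
            then show ?thesis by (rule inL)
          qed
        next
          case False
          then have nE: "x \<noteq> Map.empty" "ht x \<noteq> osucc z0" by auto
          show ?thesis
          proof (cases "BD m D x")
            case True
            then have "x \<in> BDF" using x nA nE by (simp add: BDF_def)
            then show ?thesis by blast
          next
            case nB: False
            show ?thesis
            proof (cases "\<exists>d\<in>D. d < ht x")
              case True
              have q: "qD D x < ht x \<and> (\<forall>d\<in>D. d < ht x \<longrightarrow> d \<le> qD D x)"
                using qD_prop[OF ctx htD[OF x(1) nE nA nB] True] .
              have "?f x = restr x (qD D x)" using nA nE nB True by (simp add: fm_def)
              then have "ht z = qD D x" using x(2) restrT[OF x(1)] q less_imp_le by metis
              then have "qD D x < dz" using dz by simp
              have "ht x \<le> dz"
              proof (rule ccontr)
                assume "\<not> ht x \<le> dz"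
                then have "dz < ht x" by simp
                then have "dz \<le> qD D x" using q dz by blast
                then show False using \<open>qD D x < dz\<close> by simp
              qed
              then show ?thesis by (rule inL)
            next
              case nD: False
              have "dz \<in> D" using dz by blast
              then have "ht x \<le> dz" using nD by (meson not_le)
              then show ?thesis by (rule inL)
            qed
          qed
        qed
      qed
    qed
    show ?thesis using card anti cover by blast
  qed
  show ?thesis unfolding special_def
  proof (intro exI[of _ ?f] conjI ballI impI)
    fix x assume "x \<in> ?T" then show "?f x \<in> ?T" using fT by blast
  next
    fix x assume x: "x \<in> ?T" and "\<exists>y\<in>?T. tree_less y x"
    then have "x \<noteq> Map.empty" using no_less_empty by blast
    then show "tree_less (?f x) x" using fT[OF x] by blast
  next
    fix z assume "z \<in> ?T" then show "\<exists>\<A>. \<A> \<lesssim> below m \<and> (\<forall>A\<in>\<A>. antichain_t A) \<and> {x\<in>?T. ?f x = z} \<subseteq> \<Union>\<A>"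
      by (rule fib)
  qed
qed


end
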